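(* (Church-Rosser) For all terms $e, e_1, e_2$: if $e \to\!\!\to e_1$ and $e \to\!\!\to e_2$, then there exists a term $e'$ such that $e_1 \to\!\!\to e'$ and $e_2 \to\!\!\to e'$.
   Context: Terms: $e ::= x \mid \lambda x.e \mid e\,e$ (modulo $\alpha$-equivalence, Barendregt's variable convention). Values: $v ::= \lambda x.e$. A context is a term with one hole $[\,]$; $C[e]$ is plugging, $C_1[C_2]$ composition. Answer contexts: $A ::= [\,] \mid A[\lambda x.A]\,e$. Outer partial answer contexts: $A^{\uparrow} ::= [\,] \mid A[A^{\uparrow}]\,e$. Inner partial answer contexts: $A^{\downarrow} ::= [\,] \mid A[\lambda x.A^{\downarrow}]$. Evaluation contexts: $E ::= [\,] \mid E\,e \mid A[E] \mid A^{\uparrow}[A[\lambda x.A^{\downarrow}[E[x]]]\,E]$, where in the last production $A^{\uparrow}[A^{\downarrow}]$ must be an answer context. Axiom $\beta_{need}$: $A^{\uparrow}[A_1[\lambda x.A^{\downarrow}[E[x]]]\,A_2[v]] \;\beta_{need}\; A^{\uparrow}[A_1[A_2[(A^{\downarrow}[E[x]])\{x:=v\}]]]$ provided $A^{\uparrow}[A^{\downarrow}]$ is an answer context ($\{x:=v\}$ capture-avoiding substitution for all free occurrences of $x$). $\to$ is the compatible closure of $\beta_{need}$ (closure under contexts $C ::= [\,] \mid \lambda x.C \mid C\,e \mid e\,C$) and $\to\!\!\to$ its reflexive–transitive closure. *)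

theory Defs
  imports Main
begin

text \<open>Lambda terms modulo alpha-equivalence, represented with de Bruijn indices.\<close>
datatype trm = Var nat | Lam trm | App trm trm

fun shift :: "nat \<Rightarrow> nat \<Rightarrow> trm \<Rightarrow> trm" where
  "shift d c (Var i) = Var (if c \<le> i then i + d else i)"
| "shift d c (Lam t) = Lam (shift d (Suc c) t)"
| "shift d c (App t s) = App (shift d c t) (shift d c s)"

fun subst :: "trm \<Rightarrow> nat \<Rightarrow> trm \<Rightarrow> trm" where
  "subst (Var i) k u = (if i = k then u else if k < i then Var (i - 1) else Var i)"
| "subst (Lam t) k u = Lam (subst t (Suc k) (shift 1 0 u))"
| "subst (App t s) k u = App (subst t k u) (subst s k u)"

datatype ctx = Hole | CLam ctx | CAppL ctx trm | CAppR trm ctx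

fun plug :: "ctx \<Rightarrow> trm \<Rightarrow> trm" where
  "plug Hole e = e"
| "plug (CLam C) e = Lam (plug C e)"
| "plug (CAppL C t) e = App (plug C e) t"
| "plug (CAppR t C) e = App t (plug C e)"

fun compose :: "ctx \<Rightarrow> ctx \<Rightarrow> ctx" where
  "compose Hole D = D"
| "compose (CLam C) D = CLam (compose C D)"
| "compose (CAppL C t) D = CAppL (compose C D) t"
| "compose (CAppR t C) D = CAppR t (compose C D)"

fun nb :: "ctx \<Rightarrow> nat" where
  "nb Hole = 0"
| "nb (CLam C) = Suc (nb C)"
| "nb (CAppL C t) = nb C"
| "nb (CAppR t C) = nb C"

fun cshift :: "nat \<Rightarrow> nat \<Rightarrow> ctx \<Rightarrow> ctx" where
  "cshift d c Hole = Hole"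
| "cshift d c (CLam C) = CLam (cshift d (Suc c) C)"
| "cshift d c (CAppL C t) = CAppL (cshift d c C) (shift d c t)"
| "cshift d c (CAppR t C) = CAppR (shift d c t) (cshift d c C)"

text \<open>Answer contexts  A ::= [] | A[\<lambda>x.A] e\<close>
inductive ans :: "ctx \<Rightarrow> bool" where
  "ans Hole"
| "ans A1 \<Longrightarrow> ans A2 \<Longrightarrow> ans (CAppL (compose A1 (CLam A2)) e)"

text \<open>Outer partial answer contexts  A\<up> ::= [] | A[A\<up>] e\<close>
inductive outer :: "ctx \<Rightarrow> bool" where
  "outer Hole"
| "ans A \<Longrightarrow> outer Au \<Longrightarrow> outer (CAppL (compose A Au) e)"

text \<open>Inner partial answer contexts  A\<down> ::= [] | A[\<lambda>x.A\<down>]\<close>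
inductive inner :: "ctx \<Rightarrow> bool" where
  "inner Hole"
| "ans A \<Longrightarrow> inner Ad \<Longrightarrow> inner (compose A (CLam Ad))"

text \<open>Evaluation contexts. In the last rule the variable x bound by the displayed
  lambda is the de Bruijn index nb Ad + nb E1 at the position of the hole of E1.\<close>
inductive ectx :: "ctx \<Rightarrow> bool" where
  "ectx Hole"
| "ectx E \<Longrightarrow> ectx (CAppL E e)"
| "ans A \<Longrightarrow> ectx E \<Longrightarrow> ectx (compose A E)"
| "outer Au \<Longrightarrow> ans A \<Longrightarrow> inner Ad \<Longrightarrow> ectx E1 \<Longrightarrow> ectx E2 \<Longrightarrow>
   ans (compose Au Ad) \<Longrightarrow>
   ectx (compose Au (CAppR (plug A (Lam (plug Ad (plug E1 (Var (nb Ad + nb E1)))))) E2))"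

text \<open>LHS: A\<up>[A1[\<lambda>x.A\<down>[E[x]]] A2[v]] with v = \<lambda>.b.
  RHS: A\<up>[A1[A2[(A\<down>[E[x]]){x:=v}]]], where (de Bruijn bookkeeping) A2 and v are
  lifted past the binders of A1, and the body is lifted past the binders of A2.\<close>
inductive beta_need :: "trm \<Rightarrow> trm \<Rightarrow> bool" where
  "outer Au \<Longrightarrow> ans A1 \<Longrightarrow> inner Ad \<Longrightarrow> ectx E \<Longrightarrow> ans A2 \<Longrightarrow>
   ans (compose Au Ad) \<Longrightarrow>
   beta_need
     (plug Au (App (plug A1 (Lam (plug Ad (plug E (Var (nb Ad + nb E))))))
                   (plug A2 (Lam b))))
     (plug Au (plug A1 (plug (cshift (nb A1) 0 A2)
        (subst (shift (nb A2) 1 (plug Ad (plug E (Var (nb Ad + nb E)))))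
               0 (shift (nb A1) (nb A2) (Lam b))))))"

inductive step :: "trm \<Rightarrow> trm \<Rightarrow> bool" where
  "beta_need e e' \<Longrightarrow> step e e'"
| "step e e' \<Longrightarrow> step (Lam e) (Lam e')"
| "step e e' \<Longrightarrow> step (App e t) (App e' t)"
| "step e e' \<Longrightarrow> step (App t e) (App t e')"

definition mstep :: "trm \<Rightarrow> trm \<Rightarrow> bool" where
  "mstep = step\<^sup>*\<^sup>*"

end

theory Submission
  imports Defs
begin

lemma shift0[simp]: "shift 0 c t = t" by (induction t arbitrary: c) auto

lemma shift_shift_comm: "c \<le> c' \<Longrightarrow> shift d c (shift d' c' t) = shift d' (c' + d) (shift d c t)"
  by (induction t arbitrary: c c') auto

lemma shift_shift_add: "c \<le> c' \<Longrightarrow> c' \<le> c + d \<Longrightarrow> shift d' c' (shift d c t) = shift (d + d') c t"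
  by (induction t arbitrary: c c') auto

lemma subst_shift_cancel: "c \<le> k \<Longrightarrow> k < c + d \<Longrightarrow> subst (shift d c t) k u = shift (d - 1) c t"
  by (induction t arbitrary: c k u) auto

lemma shift_subst_lt: "k \<le> c \<Longrightarrow> shift d c (subst t k u) = subst (shift d (Suc c) t) k (shift d c u)"
proof (induction t arbitrary: c k u)
  case (Lam t)
  have "shift d (Suc c) (shift 1 0 u) = shift 1 0 (shift d c u)"
    using shift_shift_comm[of 0 c 1 d u] by simp
  with Lam show ?case by auto
qed auto

lemma shift_subst_ge: "c \<le> k \<Longrightarrow> shift d c (subst t k u) = subst (shift d c t) (k + d) (shift d c u)"
proof (induction t arbitrary: c k u)
  case (Lam t)
  have "shift d (Suc c) (shift 1 0 u) = shift 1 0 (shift d c u)"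
    using shift_shift_comm[of 0 c 1 d u] by simp
  with Lam show ?case by auto
qed auto

lemma subst_subst: "i \<le> j \<Longrightarrow> subst (subst t i u) j v = subst (subst t (Suc j) (shift 1 i v)) i (subst u j v)"
proof (induction t arbitrary: i j u v)
  case (Var n)
  then show ?case
    by (auto simp: subst_shift_cancel[where d=1, simplified])
next
  case (Lam t)
  have 1: "shift 1 0 (subst u j v) = subst (shift 1 0 u) (Suc j) (shift 1 0 v)"
    using shift_subst_ge[of 0 j 1 u v] by simp
  have 2: "shift 1 0 (shift 1 i v) = shift 1 (Suc i) (shift 1 0 v)"
    using shift_shift_comm[of 0 i 1 1 v] by simp
  show ?case using Lam(1)[of "Suc i" "Suc j" "shift 1 0 u" "shift 1 0 v"] Lam(2) 1 2 by simp
qed auto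

fun csubst :: "ctx \<Rightarrow> nat \<Rightarrow> trm \<Rightarrow> ctx" where
  "csubst Hole k u = Hole"
| "csubst (CLam C) k u = CLam (csubst C (Suc k) (shift 1 0 u))"
| "csubst (CAppL C t) k u = CAppL (csubst C k u) (subst t k u)"
| "csubst (CAppR t C) k u = CAppR (subst t k u) (csubst C k u)"

lemma plug_compose[simp]: "plug (compose C D) t = plug C (plug D t)"
  by (induction C) auto
lemma compose_assoc[simp]: "compose (compose C D) E = compose C (compose D E)"
  by (induction C) auto
lemma compose_Hole[simp]: "compose C Hole = C"
  by (induction C) auto
lemma nb_compose[simp]: "nb (compose C D) = nb C + nb D"
  by (induction C) auto
lemma nb_cshift[simp]: "nb (cshift d c C) = nb C"
  by (induction C arbitrary: c) auto
lemma nb_csubst[simp]: "nb (csubst C k u) = nb C"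
  by (induction C arbitrary: k u) auto
lemma cshift_compose: "cshift d c (compose C D) = compose (cshift d c C) (cshift d (c + nb C) D)"
  by (induction C arbitrary: c) auto
lemma shift_plug: "shift d c (plug C t) = plug (cshift d c C) (shift d (c + nb C) t)"
  by (induction C arbitrary: c) auto

lemma shift_shift0: "shift 1 0 (shift n 0 u) = shift (Suc n) 0 u"
  using shift_shift_add[of 0 0 n 1 u] by simp
lemma shift_shift0'[simp]: "shift n 0 (shift (Suc 0) 0 u) = shift (Suc n) 0 u"
  using shift_shift_add[of 0 0 1 n u] by simp

lemma csubst_compose: "csubst (compose C D) k u = compose (csubst C k u) (csubst D (k + nb C) (shift (nb C) 0 u))"
proof (induction C arbitrary: k u)
  case (CLam C)
  then show ?case by (simp add: shift_shift0)
qed auto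

lemma subst_plug: "subst (plug C t) k u = plug (csubst C k u) (subst t (k + nb C) (shift (nb C) 0 u))"
proof (induction C arbitrary: k u)
  case (CLam C)
  then show ?case by (simp add: shift_shift0)
qed auto

lemma cshift_cshift_comm: "c \<le> c' \<Longrightarrow> cshift d c (cshift d' c' C) = cshift d' (c' + d) (cshift d c C)"
  by (induction C arbitrary: c c') (auto simp: shift_shift_comm)

lemma csubst_cshift: "j \<le> k \<Longrightarrow> csubst (cshift n j C) (k + n) (shift n j u) = cshift n j (csubst C k u)"
proof (induction C arbitrary: j k u)
  case (CLam C)
  have "shift 1 0 (shift n j u) = shift n (Suc j) (shift 1 0 u)"
    using shift_shift_comm[of 0 j 1 n u] by simp
  with CLam.IH[of "Suc j" "Suc k" "shift 1 0 u"] CLam.prems show ?case by auto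
qed (auto simp: shift_subst_ge)

inductive vpos :: "nat \<Rightarrow> trm \<Rightarrow> trm \<Rightarrow> bool" where
  vp0: "vpos 0 (Lam M) M"
| vpL: "vpos n b M \<Longrightarrow> vpos (Suc n) (Lam b) M"
| vpA: "vpos (Suc n) f M \<Longrightarrow> vpos n (App f e) M"

inductive Nd :: "nat \<Rightarrow> nat \<Rightarrow> trm \<Rightarrow> nat \<Rightarrow> bool" where
  NV: "Nd a c (Var i) i"
| NAL: "Nd a (Suc c) f i \<Longrightarrow> Nd a c (App f e) i"
| NL1: "Nd a c b (Suc i) \<Longrightarrow> Nd a (Suc c) (Lam b) i"
| NL2: "Nd a 0 b (Suc i) \<Longrightarrow> Nd (Suc a) 0 (Lam b) i"
| NAR: "vpos 0 f M \<Longrightarrow> Nd c 0 M 0 \<Longrightarrow> Nd 0 0 e i \<Longrightarrow> Nd a c (App f e) i"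

inductive_cases vposLamE: "vpos n (Lam b) M"
inductive_cases vposAppE: "vpos n (App f e) M"
inductive_cases vposVarE: "vpos n (Var i) M"
inductive_cases NdVarE: "Nd a c (Var k) i"
inductive_cases NdLamE: "Nd a c (Lam b) i"
inductive_cases NdAppE: "Nd a c (App f e) i"

lemma vpos_det: "vpos n t M \<Longrightarrow> vpos n t M' \<Longrightarrow> M = M'"
proof (induction t arbitrary: n M M')
  case (Var x) then show ?case by (auto elim: vposVarE)
next
  case (Lam b)
  show ?case
  proof (cases n)
    case 0 then show ?thesis using Lam.prems by (auto elim: vposLamE)
  next
    case (Suc n0)
    from Lam.prems Suc have "vpos n0 b M" "vpos n0 b M'" by (auto elim: vposLamE)
    then show ?thesis using Lam.IH by blast
  qed
next
  case (App f e)
  from App.prems have "vpos (Suc n) f M" "vpos (Suc n) f M'" by (auto elim: vposAppE)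
  then show ?case using App.IH by blast
qed

lemma vpos_split: "vpos p f M2 \<Longrightarrow> vpos (p + n + 1) f M \<Longrightarrow> vpos n M2 M"
proof (induction f arbitrary: p n M M2)
  case (Var x) then show ?case by (auto elim: vposVarE)
next
  case (Lam b)
  show ?case
  proof (cases p)
    case 0
    with Lam.prems have "M2 = b" by (auto elim: vposLamE)
    moreover from Lam.prems 0 have "vpos n b M" by (auto elim: vposLamE)
    ultimately show ?thesis by simp
  next
    case (Suc p0)
    from Lam.prems Suc have "vpos p0 b M2" "vpos (p0 + n + 1) b M" by (auto elim: vposLamE)
    then show ?thesis using Lam.IH by blast
  qed
next
  case (App f e)
  from App.prems have "vpos (Suc p) f M2" "vpos (Suc p + n + 1) f M" by (auto elim: vposAppE)
  then show ?case using App.IH by blast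
qed

lemma vpos_trans: "vpos p B N \<Longrightarrow> vpos n N M \<Longrightarrow> vpos (p + n + 1) B M"
proof (induction rule: vpos.induct)
  case (vp0 M) then show ?case by (simp add: vpL)
next
  case (vpL n b M) then show ?case by (simp add: vpos.vpL)
next
  case (vpA n f M e) then show ?case using vpos.vpA by fastforce
qed

lemma vpos_size: "vpos n t M \<Longrightarrow> size M < size t"
  by (induction rule: vpos.induct) auto

lemma NdApp_inv: "Nd a c (App f e) i \<Longrightarrow> Nd a (Suc c) f i \<or> (\<exists>M. vpos 0 f M \<and> Nd c 0 M 0 \<and> Nd 0 0 e i)"
  by (auto elim: NdAppE)

lemma Nd_mono: "Nd a c t i \<Longrightarrow> a \<le> a' \<Longrightarrow> c \<le> c' \<Longrightarrow> Nd a' c' t i"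
proof (induction arbitrary: a' c' rule: Nd.induct)
  case (NV a c i) then show ?case by (auto intro: Nd.intros)
next
  case (NAL a c f i e) then show ?case by (auto intro: Nd.intros)
next
  case (NL1 a c b i)
  then obtain c0 where "c' = Suc c0" "c \<le> c0" by (cases c') auto
  with NL1 show ?case by (auto intro: Nd.intros)
next
  case (NL2 a b i)
  show ?case
  proof (cases c')
    case 0
    with NL2 obtain a0 where "a' = Suc a0" "a \<le> a0" by (cases a') auto
    with NL2 0 show ?thesis by (auto intro: Nd.intros)
  next
    case (Suc c0)
    with NL2 show ?thesis by (auto intro: Nd.intros)
  qed
next
  case (NAR f M c e i a) then show ?case by (auto intro: Nd.intros)
qed

lemma answer_not_needed:
  "vpos n t M \<Longrightarrow> a + c \<le> n \<Longrightarrow> Nd a c t i \<Longrightarrow> False"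
proof (induction "size t" arbitrary: t n M a c i rule: less_induct)
  case less
  from less.prems(3) show ?case
  proof (cases rule: Nd.cases)
    case (NV) then show ?thesis using less.prems by (auto elim: vposVarE)
  next
    case (NAL f e)
    from less.prems(1) NAL have v: "vpos (Suc n) f M" by (auto elim: vposAppE)
    show ?thesis using less.hyps[of f "Suc n" M a "Suc c" i] v NAL less.prems(2) by simp
  next
    case (NL1 c0 b)
    from less.prems(1,2) NL1 obtain n0 where "n = Suc n0" "vpos n0 b M"
      by (auto elim: vposLamE)
    then show ?thesis using less.hyps[of b n0 M a c0 "Suc i"] NL1 less.prems(2) by simp
  next
    case (NL2 a0 b)
    from less.prems(1,2) NL2 obtain n0 where "n = Suc n0" "vpos n0 b M"
      by (auto elim: vposLamE)
    then show ?thesis using less.hyps[of b n0 M a0 0 "Suc i"] NL2 less.prems(2) by simp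
  next
    case (NAR f M2 e)
    from less.prems(1) NAR have v: "vpos (Suc n) f M" by (auto elim: vposAppE)
    have "vpos n M2 M" using vpos_split[OF NAR(2), of n M] v by simp
    moreover have "size M2 < size t" using vpos_size[OF NAR(2)] NAR by simp
    ultimately show ?thesis using less.hyps[of M2 n M c 0 0] NAR less.prems by auto
  qed
qed

lemma Nd_unique_aux:
  "(\<forall>a c i a' c' j. Nd a c t i \<longrightarrow> Nd a' c' t j \<longrightarrow> i = j) \<and>
   (\<forall>n M c a2 c2 j. vpos n t M \<longrightarrow> Nd c 0 M 0 \<longrightarrow> Nd a2 c2 t j \<longrightarrow> False)"
proof (induction "size t" arbitrary: t rule: less_induct)
  case less
  have IHU: "i = j" if "size s < size t" "Nd a c s i" "Nd a' c' s j" for s a c i a' c' j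
    using less.hyps[OF that(1)] that(2,3) by blast
  have IHV: False if "size s < size t" "vpos n s M" "Nd c 0 M 0" "Nd a2 c2 s j" for s n M c a2 c2 j
    using less.hyps[OF that(1)] that(2-4) by blast
  have U: "i = j" if h1: "Nd a c t i" and h2: "Nd a' c' t j" for a c i a' c' j
  proof (cases t)
    case (Var k) then show ?thesis using h1 h2 by (auto elim: NdVarE)
  next
    case (Lam b)
    from h1 Lam obtain a1 c1 where b1: "Nd a1 c1 b (Suc i)" by (auto elim: NdLamE)
    moreover from h2 Lam obtain a2 c2 where b2: "Nd a2 c2 b (Suc j)" by (auto elim: NdLamE)
    have "size b < size t" using Lam by simp
    from IHU[OF this b1 b2] show ?thesis by simp
  next
    case (App f e)
    have sf: "size f < size t" and se: "size e < size t" using App by auto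
    have h1': "Nd a c (App f e) i" and h2': "Nd a' c' (App f e) j" using h1 h2 App by auto
    from NdApp_inv[OF h1'] NdApp_inv[OF h2'] show ?thesis
    proof (elim disjE exE conjE)
      assume "Nd a (Suc c) f i" "Nd a' (Suc c') f j"
      then show ?thesis using IHU[OF sf] by blast
    next
      fix M assume "Nd a (Suc c) f i" "vpos 0 f M" "Nd c' 0 M 0"
      then show ?thesis using IHV[OF sf] by blast
    next
      fix M assume "Nd a' (Suc c') f j" "vpos 0 f M" "Nd c 0 M 0"
      then show ?thesis using IHV[OF sf] by blast
    next
      fix M M' assume "Nd 0 0 e i" "Nd 0 0 e j"
      then show ?thesis using IHU[OF se] by blast
    qed
  qed
  have V: False if h1: "vpos n t M" and h2: "Nd c 0 M 0" and h3: "Nd a2 c2 t j" for n M c a2 c2 j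
  proof (cases t)
    case (Var k) then show ?thesis using h1 by (auto elim: vposVarE)
  next
    case (Lam b)
    have sb: "size b < size t" using Lam by auto
    from h3 Lam obtain a1 c1 where hb: "Nd a1 c1 b (Suc j)" by (auto elim: NdLamE)
    have h1': "vpos n (Lam b) M" using h1 Lam by simp
    then have "M = b \<or> (\<exists>n0. vpos n0 b M)" by (auto elim: vposLamE)
    then show ?thesis
    proof
      assume "M = b" then show ?thesis using IHU[OF sb hb] h2 by blast
    next
      assume "\<exists>n0. vpos n0 b M" then show ?thesis using IHV[OF sb _ h2 hb] by blast
    qed
  next
    case (App f e)
    have sf: "size f < size t" using App by auto
    from h1 App have vf: "vpos (Suc n) f M" by (auto elim: vposAppE)
    have h3': "Nd a2 c2 (App f e) j" using h3 App by simp
    from NdApp_inv[OF h3'] show ?thesis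
    proof (elim disjE exE conjE)
      assume "Nd a2 (Suc c2) f j" then show ?thesis using IHV[OF sf vf h2] by blast
    next
      fix M2 assume m2: "vpos 0 f M2" "Nd c2 0 M2 0"
      have v2: "vpos n M2 M" using vpos_split[OF m2(1), of n M] vf by simp
      have "size M2 < size t" using vpos_size[OF m2(1)] App by simp
      from IHV[OF this v2 h2 m2(2)] show ?thesis .
    qed
  qed
  show ?case using U V by blast
qed

lemma Nd_unique: "Nd a c t i \<Longrightarrow> Nd a' c' t j \<Longrightarrow> i = j"
  using Nd_unique_aux by blast

lemma vpos_Nd_conflict: "vpos n t M \<Longrightarrow> Nd c 0 M 0 \<Longrightarrow> Nd a2 c2 t j \<Longrightarrow> False"
  using Nd_unique_aux by blast

inductive outk :: "nat \<Rightarrow> ctx \<Rightarrow> bool" where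
  ok0: "outk 0 Hole"
| okS: "ans A \<Longrightarrow> outk k P \<Longrightarrow> outk (Suc k) (CAppL (compose A P) e)"

inductive ink :: "nat \<Rightarrow> ctx \<Rightarrow> bool" where
  ik0: "ink 0 Hole"
| ikS: "ans A \<Longrightarrow> ink m D \<Longrightarrow> ink (Suc m) (compose A (CLam D))"

inductive wb :: "nat \<Rightarrow> ctx \<Rightarrow> bool" where
  wb0: "wb 0 Hole"
| wbL: "wb n W \<Longrightarrow> wb (Suc n) (CLam W)"
| wbA: "wb (Suc n) W \<Longrightarrow> wb n (CAppL W e)"

lemma outer_outk: "outer P \<Longrightarrow> \<exists>k. outk k P"
  by (induction rule: outer.induct) (auto intro: outk.intros)
lemma outk_outer: "outk k P \<Longrightarrow> outer P"
  by (induction rule: outk.induct) (auto intro: outer.intros)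
lemma inner_ink: "inner D \<Longrightarrow> \<exists>m. ink m D"
  by (induction rule: inner.induct) (auto intro: ink.intros)
lemma ink_inner: "ink m D \<Longrightarrow> inner D"
  by (induction rule: ink.induct) (auto intro: inner.intros)

fun dl :: "ctx \<Rightarrow> int" where
  "dl Hole = 0"
| "dl (CLam C) = dl C - 1"
| "dl (CAppL C t) = dl C + 1"
| "dl (CAppR t C) = dl C"

lemma dl_compose[simp]: "dl (compose C D) = dl C + dl D"
  by (induction C) auto
lemma ans_dl: "ans A \<Longrightarrow> dl A = 0"
  by (induction rule: ans.induct) auto
lemma outk_dl: "outk k P \<Longrightarrow> dl P = int k"
  by (induction rule: outk.induct) (auto simp: ans_dl)
lemma ink_dl: "ink m D \<Longrightarrow> dl D = - int m"
  by (induction rule: ink.induct) (auto simp: ans_dl)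

lemma ans_compose: "ans A \<Longrightarrow> ans B \<Longrightarrow> ans (compose A B)"
proof (induction rule: ans.induct)
  case 1 then show ?case by simp
next
  case (2 A1 A2 e)
  then show ?case using ans.intros(2)[of A1 "compose A2 B" e] by simp
qed

lemma ans_vpos: "ans A \<Longrightarrow> vpos n X M \<Longrightarrow> vpos n (plug A X) M"
proof (induction arbitrary: n X rule: ans.induct)
  case 1 then show ?case by simp
next
  case (2 A1 A2 e)
  have "vpos n (plug A2 X) M" using 2 by blast
  then have "vpos (Suc n) (Lam (plug A2 X)) M" by (rule vpL)
  then have "vpos (Suc n) (plug A1 (Lam (plug A2 X))) M" using 2 by blast
  then show ?case by (simp add: vpA)
qed

lemma ans_vpos0: "ans A \<Longrightarrow> vpos 0 (plug A (Lam M)) M"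
  using ans_vpos vp0 by blast

lemma vpos_wb: "vpos n t M \<Longrightarrow> \<exists>W. wb n W \<and> t = plug W (Lam M)"
proof (induction rule: vpos.induct)
  case (vp0 M) then show ?case using wb0 by force
next
  case (vpL n b M) then show ?case using wbL by force
next
  case (vpA n f M e) then show ?case using wbA by force
qed

lemma size_compose: "size D \<le> size (compose C D)"
  by (induction C) auto

lemma wb_ans_aux:
  "(wb 0 W \<longrightarrow> ans W) \<and> (\<forall>n. wb (Suc n) W \<longrightarrow> (\<exists>A D. W = compose A (CLam D) \<and> ans A \<and> wb n D))"
proof (induction "size W" arbitrary: W rule: less_induct)
  case less
  show ?case
  proof (cases W)
    case Hole then show ?thesis by (auto elim: wb.cases intro: ans.intros)
  next
    case (CLam W')
    have "\<exists>A D. W = compose A (CLam D) \<and> ans A \<and> wb n D" if "wb (Suc n) W" for n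
      using that CLam by (intro exI[of _ Hole] exI[of _ W']) (auto elim: wb.cases intro: ans.intros)
    moreover have "\<not> wb 0 W" using CLam by (auto elim: wb.cases)
    ultimately show ?thesis by blast
  next
    case (CAppR t W')
    then show ?thesis by (auto elim: wb.cases)
  next
    case (CAppL W' e)
    have sW': "size W' < size W" using CAppL by simp
    have P1: "ans W" if "wb 0 W"
    proof -
      from that CAppL have "wb (Suc 0) W'" by (auto elim: wb.cases)
      with less.hyps[OF sW'] obtain A D where AD: "W' = compose A (CLam D)" "ans A" "wb 0 D" by blast
      have "size D < size W" using sW' AD(1) size_compose[of "CLam D" A] by simp
      with less.hyps AD have "ans D" by blast
      with AD CAppL show ?thesis by (auto intro: ans.intros)
    qed
    have P2: "\<exists>A D. W = compose A (CLam D) \<and> ans A \<and> wb n D" if "wb (Suc n) W" for n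
    proof -
      from that CAppL have "wb (Suc (Suc n)) W'" by (auto elim: wb.cases)
      with less.hyps[OF sW'] obtain A1 D1 where AD: "W' = compose A1 (CLam D1)" "ans A1" "wb (Suc n) D1" by blast
      have "size D1 < size W" using sW' AD(1) size_compose[of "CLam D1" A1] by simp
      with less.hyps AD obtain A2 D2 where AD2: "D1 = compose A2 (CLam D2)" "ans A2" "wb n D2" by blast
      have "W = compose (CAppL (compose A1 (CLam A2)) e) (CLam D2)" using CAppL AD AD2 by simp
      moreover have "ans (CAppL (compose A1 (CLam A2)) e)" using AD AD2 by (auto intro: ans.intros)
      ultimately show ?thesis using AD2 by blast
    qed
    show ?thesis using P1 P2 by blast
  qed
qed

lemma wb_ans: "wb 0 W \<Longrightarrow> ans W"
  using wb_ans_aux by blast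

lemma vpos_ans: "vpos 0 f M \<Longrightarrow> \<exists>A. ans A \<and> f = plug A (Lam M)"
  using vpos_wb wb_ans by blast

lemma ans_Nd: "ans A \<Longrightarrow> Nd a c t (i + nb A) \<Longrightarrow> Nd a c (plug A t) i"
proof (induction arbitrary: c t i rule: ans.induct)
  case 1 then show ?case by simp
next
  case (2 A1 A2 e)
  have "Nd a c (plug A2 t) (Suc (i + nb A1))"
    using 2 by (simp add: add.assoc)
  then have "Nd a (Suc c) (Lam (plug A2 t)) (i + nb A1)" by (rule NL1)
  then have "Nd a (Suc c) (plug A1 (Lam (plug A2 t))) i" using 2 by blast
  then show ?case by (simp add: NAL)
qed

lemma outk_Nd: "outk k P \<Longrightarrow> Nd a (c + k) t (i + nb P) \<Longrightarrow> Nd a c (plug P t) i"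
proof (induction arbitrary: c t i rule: outk.induct)
  case ok0 then show ?case by simp
next
  case (okS A k P e)
  have "Nd a (Suc c) (plug P t) (i + nb A)" using okS by (simp add: add.assoc)
  then have "Nd a (Suc c) (plug A (plug P t)) i" using ans_Nd okS by blast
  then show ?case by (simp add: NAL)
qed

lemma ink_Nd: "ink m D \<Longrightarrow> Nd a 0 t (i + nb D) \<Longrightarrow> Nd (a + m) 0 (plug D t) i"
proof (induction arbitrary: a t i rule: ink.induct)
  case ik0 then show ?case by simp
next
  case (ikS A m D)
  have "Nd (a + m) 0 (plug D t) (Suc (i + nb A))" using ikS by (simp add: add.assoc)
  then have "Nd (a + Suc m) 0 (Lam (plug D t)) (i + nb A)" using NL2 by simp
  then show ?case using ans_Nd ikS by simp
qed

lemma ectx_Nd: "ectx E \<Longrightarrow> Nd a c (plug E (Var (i + nb E))) i"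
proof (induction arbitrary: a c i rule: ectx.induct)
  case 1 then show ?case by (simp add: NV)
next
  case (2 E e) then show ?case by (simp add: NAL)
next
  case (3 A E)
  have "Nd a c (plug E (Var ((i + nb A) + nb E))) (i + nb A)" using 3 by blast
  then show ?case using ans_Nd[OF 3(1), of a c "plug E (Var (i + nb A + nb E))" i]
    by (simp add: add.assoc)
next
  case (4 Au A Ad E1 E2)
  have IH1: "Nd a c (plug E1 (Var (i + nb E1))) i" for a c i by fact
  have IH2: "Nd a c (plug E2 (Var (i + nb E2))) i" for a c i by fact
  obtain k where k: "outk k Au" using outer_outk 4(1) by blast
  obtain m where m: "ink m Ad" using inner_ink 4(3) by blast
  have "dl (compose Au Ad) = 0" using ans_dl[OF \<open>ans (compose Au Ad)\<close>] .
  then have mk: "m = k" using outk_dl[OF k] ink_dl[OF m] by simp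
  let ?M = "plug Ad (plug E1 (Var (nb Ad + nb E1)))"
  have "Nd 0 0 (plug E1 (Var (nb Ad + nb E1))) (nb Ad)" by (rule IH1)
  then have "Nd (0 + m) 0 ?M 0" using ink_Nd[OF m, of 0 _ 0] by simp
  then have M: "Nd (c + k) 0 ?M 0" using Nd_mono mk by fastforce
  have v: "vpos 0 (plug A (Lam ?M)) ?M" using ans_vpos0 4(2) by blast
  have e2: "Nd 0 0 (plug E2 (Var (i + nb Au + nb E2))) (i + nb Au)" by (rule IH2)
  have "Nd a (c + k) (App (plug A (Lam ?M)) (plug E2 (Var (i + nb Au + nb E2)))) (i + nb Au)"
    using NAR[OF v M e2] .
  then show ?case using outk_Nd[OF k] by (simp add: add.assoc)
qed

lemma outk0: "outk 0 P \<Longrightarrow> P = Hole" by (auto elim: outk.cases)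
lemma ink0: "ink 0 D \<Longrightarrow> D = Hole" by (auto elim: ink.cases)

lemma outk_ectx_prefix: "outk k P \<Longrightarrow> ectx X \<Longrightarrow> ectx (compose P X)"
proof (induction rule: outk.induct)
  case ok0 then show ?case by simp
next
  case (okS A k P e)
  then have "ectx (compose A (compose P X))" by (auto intro: ectx.intros(3))
  then show ?case by (auto intro: ectx.intros(2))
qed

lemma outk_snoc: "outk k P \<Longrightarrow> outk (Suc k) (compose P (CAppL Hole e))"
proof (induction rule: outk.induct)
  case ok0
  have "outk (Suc 0) (CAppL (compose Hole Hole) e)" by (rule okS) (auto intro: ans.intros outk.ok0)
  then show ?case by simp
next
  case (okS A k P e')
  then show ?case using outk.okS[of A "Suc k" "compose P (CAppL Hole e)" e'] by simp
qed

lemma outk_close: "outk n P \<Longrightarrow> n = Suc k \<Longrightarrow> \<exists>R Q. ans R \<and> compose P (CLam Hole) = compose R Q \<and> outk k Q"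
proof (induction arbitrary: k rule: outk.induct)
  case ok0 then show ?case by simp
next
  case (okS A k0 P e)
  then have k0: "k0 = k" by simp
  show ?case
  proof (cases k)
    case 0
    with okS k0 have "P = Hole" using outk0 by simp
    then have "compose (CAppL (compose A P) e) (CLam Hole) = compose (CAppL (compose A (CLam Hole)) e) Hole"
      by simp
    moreover have "ans (CAppL (compose A (CLam Hole)) e)" using okS by (auto intro: ans.intros)
    ultimately show ?thesis using 0 outk.ok0 by blast
  next
    case (Suc k')
    with okS k0 obtain R Q where RQ: "ans R" "compose P (CLam Hole) = compose R Q" "outk k' Q" by blast
    have "compose (CAppL (compose A P) e) (CLam Hole) = compose Hole (CAppL (compose (compose A R) Q) e)"
      using RQ by simp
    moreover have "outk k (CAppL (compose (compose A R) Q) e)"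
      using outk.okS[OF ans_compose[OF okS(1) RQ(1)] RQ(3)] Suc by simp
    ultimately show ?thesis using ans.intros(1) by blast
  qed
qed

lemma outk_split: "outk k P \<Longrightarrow> m \<le> k \<Longrightarrow> \<exists>P1 P2 l. P = compose P1 P2 \<and> outk l P1 \<and> outk m P2"
proof (induction arbitrary: m rule: outk.induct)
  case ok0
  then have "Hole = compose Hole Hole" "outk 0 Hole" "outk m Hole" using outk.ok0 by auto
  then show ?case by blast
next
  case (okS A k P e)
  show ?case
  proof (cases "m = Suc k")
    case True
    have "CAppL (compose A P) e = compose Hole (CAppL (compose A P) e)" by simp
    moreover have "outk m (CAppL (compose A P) e)" using True outk.okS[OF okS(1,2)] by simp
    ultimately show ?thesis using outk.ok0 by blast
  next
    case False
    have "m \<le> k" using okS.prems False by simp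
    with okS.IH obtain P1 P2 l where H: "P = compose P1 P2" "outk l P1" "outk m P2" by blast
    have "CAppL (compose A P) e = compose (CAppL (compose A P1) e) P2" using H by simp
    moreover have "outk (Suc l) (CAppL (compose A P1) e)" using outk.okS[OF okS(1) H(2)] .
    ultimately show ?thesis using H by blast
  qed
qed

lemma ink_snoc: "ink n D \<Longrightarrow> n = Suc m \<Longrightarrow> \<exists>D0 A. D = compose D0 (compose A (CLam Hole)) \<and> ink m D0 \<and> ans A"
proof (induction arbitrary: m rule: ink.induct)
  case ik0 then show ?case by simp
next
  case (ikS A m0 D)
  then have m0: "m0 = m" by simp
  show ?case
  proof (cases m)
    case 0
    with ikS m0 have "D = Hole" using ink0 by simp
    then have "compose A (CLam D) = compose Hole (compose A (CLam Hole))" by simp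
    then show ?thesis using ikS ik0 0 by blast
  next
    case (Suc m')
    with ikS m0 obtain D0 A2 where H: "D = compose D0 (compose A2 (CLam Hole))" "ink m' D0" "ans A2" by blast
    have "compose A (CLam D) = compose (compose A (CLam D0)) (compose A2 (CLam Hole))" using H by simp
    moreover have "ink m (compose A (CLam D0))" using Suc ink.ikS[OF ikS(1) H(2)] by simp
    ultimately show ?thesis using H by blast
  qed
qed

lemma outk_ink_ans: "outk m P \<Longrightarrow> ink m D \<Longrightarrow> ans (compose P D)"
proof (induction arbitrary: D rule: outk.induct)
  case ok0 then show ?case using ink0 by (auto intro: ans.intros)
next
  case (okS A k P e)
  from ink_snoc[OF okS.prems refl] obtain D0 A2 where D: "D = compose D0 (compose A2 (CLam Hole))"
    "ink k D0" "ans A2" by blast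
  have "ans (compose P D0)" using okS D by blast
  then have "ans (compose (compose P D0) A2)" using D(3) by (rule ans_compose)
  then have a1: "ans (compose A (compose (compose P D0) A2))" using okS(1) by (rule ans_compose[rotated])
  have "compose (CAppL (compose A P) e) D = CAppL (compose (compose A (compose (compose P D0) A2)) (CLam Hole)) e"
    using D by simp
  moreover have "ans (CAppL (compose (compose A (compose (compose P D0) A2)) (CLam Hole)) e)"
    using a1 ans.intros(1) by (rule ans.intros(2))
  ultimately show ?case by simp
qed

lemma ink_prefix: "ans B \<Longrightarrow> ink (Suc m) D \<Longrightarrow> ink (Suc m) (compose B D)"
proof -
  assume B: "ans B" and D: "ink (Suc m) D"
  from D obtain A D' where "D = compose A (CLam D')" "ans A" "ink m D'" by (cases rule: ink.cases) auto
  then show ?thesis using ink.ikS[OF ans_compose[OF B \<open>ans A\<close>] \<open>ink m D'\<close>] by simp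
qed

lemma Nd_grammar:
  "Nd a c t j' \<Longrightarrow> j' = j + nb P \<Longrightarrow> outk c P \<Longrightarrow>
   \<exists>Ad E m. m \<le> a \<and> ink m Ad \<and> ectx E \<and> plug P t = plug Ad (plug E (Var (j + nb Ad + nb E)))"
proof (induction arbitrary: j P rule: Nd.induct)
  case (NV a c i)
  then show ?case using outk_ectx_prefix[of c P Hole] ectx.intros(1) ink.ik0
    by (intro exI[of _ Hole] exI[of _ P] exI[of _ 0]) auto
next
  case (NAL a c f i e)
  have "outk (Suc c) (compose P (CAppL Hole e))" using outk_snoc NAL by blast
  with NAL.IH[of j "compose P (CAppL Hole e)"] NAL.prems show ?case by auto
next
  case (NL1 a c b i)
  from outk_close[OF NL1.prems(2) refl] obtain R Q where RQ: "ans R" "compose P (CLam Hole) = compose R Q" "outk c Q"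
    by blast
  have nbs: "nb P + 1 = nb R + nb Q" using arg_cong[OF RQ(2), of nb] by simp
  have "Suc i = (j + nb R) + nb Q" using NL1.prems nbs by simp
  from NL1.IH[OF this RQ(3)] obtain Ad E m where H: "m \<le> a" "ink m Ad" "ectx E"
    "plug Q b = plug Ad (plug E (Var (j + nb R + nb Ad + nb E)))" by blast
  have eq: "plug P (Lam b) = plug R (plug Q b)"
    using arg_cong[OF RQ(2), of "\<lambda>C. plug C b"] by simp
  show ?case
  proof (cases m)
    case 0
    with H have "Ad = Hole" using ink0 by simp
    then show ?thesis using H eq 0 RQ(1) ectx.intros(3)[OF RQ(1) H(3)] ink.ik0
      by (intro exI[of _ Hole] exI[of _ "compose R E"] exI[of _ 0]) (auto simp: add.assoc)
  next
    case (Suc m')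
    then show ?thesis using H eq ink_prefix[OF RQ(1), of m' Ad]
      by (intro exI[of _ "compose R Ad"] exI[of _ E] exI[of _ m]) (auto simp: add.assoc)
  qed
next
  case (NL2 a b i)
  then have P: "P = Hole" using outk0 by simp
  from NL2.IH[of "Suc j" Hole] NL2.prems P obtain Ad E m where H: "m \<le> a" "ink m Ad" "ectx E"
    "b = plug Ad (plug E (Var (Suc j + nb Ad + nb E)))" using outk.ok0 by auto
  have "ink (Suc m) (compose Hole (CLam Ad))" using H ans.intros(1) by (intro ink.ikS)
  then show ?case using H P by (intro exI[of _ "CLam Ad"] exI[of _ E] exI[of _ "Suc m"]) auto
next
  case (NAR f M c e i a)
  from NAR.IH(2)[of i Hole] outk.ok0 obtain Ad2 E2 m2 where H2: "m2 \<le> 0" "ink m2 Ad2" "ectx E2"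
    "e = plug Ad2 (plug E2 (Var (i + nb Ad2 + nb E2)))" by auto
  then have "Ad2 = Hole" using ink0 by simp
  with H2 have e: "e = plug E2 (Var (i + nb E2))" by simp
  from NAR.IH(1)[of 0 Hole] outk.ok0 obtain Ad1 E1 m1 where H1: "m1 \<le> c" "ink m1 Ad1" "ectx E1"
    "M = plug Ad1 (plug E1 (Var (nb Ad1 + nb E1)))" by auto
  from vpos_ans[OF NAR.hyps(1)] obtain A where A: "ans A" "f = plug A (Lam M)" by blast
  from outk_split[OF NAR.prems(2) H1(1)] obtain P1 P2 l where PP: "P = compose P1 P2" "outk l P1" "outk m1 P2"
    by blast
  have "ectx (compose P2 (CAppR (plug A (Lam (plug Ad1 (plug E1 (Var (nb Ad1 + nb E1)))))) E2))"
    using outk_outer[OF PP(3)] A(1) ink_inner[OF H1(2)] H1(3) H2(3) outk_ink_ans[OF PP(3) H1(2)]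
    by (rule ectx.intros(4))
  then have E: "ectx (compose P (CAppR f E2))" using PP A H1 outk_ectx_prefix[OF PP(2)] by simp
  have "plug P (App f e) = plug Hole (plug (compose P (CAppR f E2)) (Var (j + nb Hole + nb (compose P (CAppR f E2)))))"
    using e NAR.prems(1) by (simp add: add.assoc)
  then show ?case using E ink.ik0 by blast
qed

definition contract :: "ctx \<Rightarrow> ctx \<Rightarrow> trm \<Rightarrow> trm \<Rightarrow> trm" where
  "contract A1 A2 N b = plug A1 (plug (cshift (nb A1) 0 A2) (subst (shift (nb A2) 1 N) 0 (shift (nb A1) (nb A2) (Lam b))))"

inductive par :: "nat \<Rightarrow> trm \<Rightarrow> trm \<Rightarrow> bool" and parc :: "ctx \<Rightarrow> ctx \<Rightarrow> bool" where
  pV: "par K (Var i) (Var i)"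
| pL: "par (K - 1) b b' \<Longrightarrow> par K (Lam b) (Lam b')"
| pA: "par (Suc K) f f' \<Longrightarrow> par 0 e e' \<Longrightarrow> par K (App f e) (App f' e')"
| pR: "ans A1 \<Longrightarrow> ans A2 \<Longrightarrow> Nd K 0 N 0 \<Longrightarrow> parc A1 A1' \<Longrightarrow> par K N N' \<Longrightarrow> parc A2 A2' \<Longrightarrow> par 0 b b' \<Longrightarrow>
       par K (App (plug A1 (Lam N)) (plug A2 (Lam b))) (contract A1' A2' N' b')"
| cH: "parc Hole Hole"
| cL: "parc C C' \<Longrightarrow> parc (CLam C) (CLam C')"
| cA: "parc C C' \<Longrightarrow> par 0 e e' \<Longrightarrow> parc (CAppL C e) (CAppL C' e')"

lemma par_refl: "par K t t"
  by (induction t arbitrary: K) (auto intro: par_parc.intros)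

lemma parc_compose: "parc C C' \<Longrightarrow> parc D D' \<Longrightarrow> parc (compose C D) (compose C' D')"
proof (induction C arbitrary: C')
  case Hole then show ?case by (auto elim: parc.cases)
next
  case (CLam C)
  from CLam.prems obtain C0 where "C' = CLam C0" "parc C C0" by (auto elim: parc.cases)
  with CLam show ?case by (auto intro: cL)
next
  case (CAppL C e)
  from CAppL.prems obtain C0 e' where "C' = CAppL C0 e'" "parc C C0" "par 0 e e'" by (auto elim: parc.cases)
  with CAppL show ?case by (auto intro: cA)
next
  case (CAppR t C) then show ?case by (auto elim: parc.cases)
qed

lemma ans_parc_refl: "ans A \<Longrightarrow> parc A A"
  by (induction rule: ans.induct) (auto intro!: par_parc.intros parc_compose par_refl)

lemma parc_nb: "parc C C' \<Longrightarrow> nb C' = nb C"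
  by (induction C arbitrary: C' rule: ctx.induct) (auto elim: parc.cases)

lemma parc_decomp: "parc (compose C D) X \<Longrightarrow> \<exists>C' D'. X = compose C' D' \<and> parc C C' \<and> parc D D'"
proof (induction C arbitrary: X)
  case Hole then show ?case using cH by force
next
  case (CLam C)
  from CLam.prems obtain X0 where "X = CLam X0" "parc (compose C D) X0" by (auto elim: parc.cases)
  with CLam.IH show ?case by (force intro: cL)
next
  case (CAppL C e)
  from CAppL.prems obtain X0 e' where "X = CAppL X0 e'" "parc (compose C D) X0" "par 0 e e'"
    by (auto elim: parc.cases)
  with CAppL.IH show ?case by (force intro: cA)
next
  case (CAppR t C)
  then show ?case by (auto elim: parc.cases)
qed

lemma parc_ans: "ans A \<Longrightarrow> parc A A' \<Longrightarrow> ans A'"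
proof (induction arbitrary: A' rule: ans.induct)
  case 1 then show ?case by (auto elim: parc.cases intro: ans.intros)
next
  case (2 A1 A2 e)
  from "2.prems" obtain X e' where X: "A' = CAppL X e'" "parc (compose A1 (CLam A2)) X" by (auto elim: parc.cases)
  from parc_decomp[OF X(2)] obtain C1 D where CD: "X = compose C1 D" "parc A1 C1" "parc (CLam A2) D" by blast
  from CD(3) obtain D0 where "D = CLam D0" "parc A2 D0" by (auto elim: parc.cases)
  with CD X 2 show ?case by (auto intro: ans.intros)
qed

lemma par_mono_aux:
  "(par K t t' \<longrightarrow> (\<forall>K'. K \<le> K' \<longrightarrow> par K' t t')) \<and> (parc C C' \<longrightarrow> True)"
proof (induction rule: par_parc.induct[where ?P2.0 = "\<lambda>C C'. True"])
qed (auto intro: par_parc.intros Nd_mono diff_le_mono)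

lemma par_mono: "par K t t' \<Longrightarrow> K \<le> K' \<Longrightarrow> par K' t t'"
  using par_mono_aux by blast

lemma par_plug_ans: "ans A \<Longrightarrow> parc A A' \<Longrightarrow> par K X X' \<Longrightarrow> par K (plug A X) (plug A' X')"
proof (induction arbitrary: A' K X X' rule: ans.induct)
  case 1 then show ?case by (auto elim: parc.cases)
next
  case (2 A1 A2 e)
  from "2.prems"(1) obtain Y e' where Y: "A' = CAppL Y e'" "parc (compose A1 (CLam A2)) Y" "par 0 e e'"
    by (auto elim: parc.cases)
  from parc_decomp[OF Y(2)] obtain C1 D where CD: "Y = compose C1 D" "parc A1 C1" "parc (CLam A2) D" by blast
  from CD(3) obtain D0 where D0: "D = CLam D0" "parc A2 D0" by (auto elim: parc.cases)
  have "par K (plug A2 X) (plug D0 X')" using "2.IH"(2)[OF D0(2) "2.prems"(2)] .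
  then have "par (Suc K) (Lam (plug A2 X)) (Lam (plug D0 X'))" by (intro pL) simp
  then have "par (Suc K) (plug A1 (Lam (plug A2 X))) (plug C1 (Lam (plug D0 X')))"
    using "2.IH"(1)[OF CD(2)] by blast
  then show ?case using Y CD D0 by (auto intro: pA)
qed

lemma par_plug_outk: "outk k P \<Longrightarrow> par (K + k) X X' \<Longrightarrow> par K (plug P X) (plug P X')"
proof (induction arbitrary: K rule: outk.induct)
  case ok0 then show ?case by simp
next
  case (okS A k P e)
  have "par (Suc K) (plug P X) (plug P X')" using okS by simp
  then have "par (Suc K) (plug A (plug P X)) (plug A (plug P X'))"
    using par_plug_ans[OF okS(1) ans_parc_refl[OF okS(1)]] by blast
  then show ?case by (auto intro: pA par_refl)
qed

lemma beta_par: "beta_need l r \<Longrightarrow> par K l r"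
proof (induction rule: beta_need.induct)
  case (1 Au A1 Ad E A2 b)
  obtain k where k: "outk k Au" using outer_outk 1(1) by blast
  obtain m where m: "ink m Ad" using inner_ink 1(3) by blast
  have "dl (compose Au Ad) = 0" using ans_dl[OF 1(6)] .
  then have mk: "m = k" using outk_dl[OF k] ink_dl[OF m] by simp
  let ?M = "plug Ad (plug E (Var (nb Ad + nb E)))"
  have "Nd 0 0 (plug E (Var (nb Ad + nb E))) (nb Ad)" using ectx_Nd[OF 1(4)] .
  then have "Nd (0 + m) 0 ?M 0" using ink_Nd[OF m, of 0 _ 0] by simp
  then have M: "Nd (K + k) 0 ?M 0" using Nd_mono mk by fastforce
  have "par (K + k) (App (plug A1 (Lam ?M)) (plug A2 (Lam b))) (contract A1 A2 ?M b)"
    using 1 M by (intro pR ans_parc_refl par_refl)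
  then show ?case using par_plug_outk[OF k] by (simp add: contract_def)
qed

lemma step_par: "step e e' \<Longrightarrow> par K e e'"
proof (induction arbitrary: K rule: step.induct)
  case (1 e e') then show ?case by (rule beta_par)
qed (auto intro: par_parc.intros par_refl)

lemma par_Nd_aux:
  "(par K t t' \<longrightarrow> (\<forall>a c i. Nd a c t i \<longrightarrow> Nd a c t' i) \<and>
     (\<forall>n M c. vpos n t M \<longrightarrow> Nd c 0 M 0 \<longrightarrow> (\<exists>M'. vpos n t' M' \<and> Nd c 0 M' 0))) \<and>
   (parc C C' \<longrightarrow> True)"
proof (induction rule: par_parc.induct[where ?P2.0 = "\<lambda>C C'. True"])
  case (pV K i) then show ?case by (auto elim: vposVarE)
next
  case (pL K b b')
  have H: "Nd a c (Lam b') i" if "Nd a c (Lam b) i" for a c i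
    using that pL by (auto elim!: NdLamE intro: Nd.intros)
  have V: "\<exists>M'. vpos n (Lam b') M' \<and> Nd c 0 M' 0" if "vpos n (Lam b) M" "Nd c 0 M 0" for n M c
  proof -
    from that(1) have "(n = 0 \<and> M = b) \<or> (\<exists>n0. n = Suc n0 \<and> vpos n0 b M)" by (auto elim: vposLamE)
    then show ?thesis
    proof
      assume "n = 0 \<and> M = b" then show ?thesis using that pL by (auto intro: vp0)
    next
      assume "\<exists>n0. n = Suc n0 \<and> vpos n0 b M"
      then obtain n0 where n0: "n = Suc n0" "vpos n0 b M" by blast
      with pL that(2) obtain M' where "vpos n0 b' M'" "Nd c 0 M' 0" by blast
      then show ?thesis using n0 by (auto intro: vpL)
    qed
  qed
  show ?case using H V by blast
next
  case (pA K f f' e e')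
  have H: "Nd a c (App f' e') i" if "Nd a c (App f e) i" for a c i
    using NdApp_inv[OF that]
  proof
    assume "Nd a (Suc c) f i" then show ?thesis using pA by (auto intro: NAL)
  next
    assume "\<exists>M. vpos 0 f M \<and> Nd c 0 M 0 \<and> Nd 0 0 e i"
    then obtain M where "vpos 0 f M" "Nd c 0 M 0" "Nd 0 0 e i" by blast
    with pA obtain M' where "vpos 0 f' M'" "Nd c 0 M' 0" "Nd 0 0 e' i" by blast
    then show ?thesis by (rule NAR)
  qed
  have V: "\<exists>M'. vpos n (App f' e') M' \<and> Nd c 0 M' 0" if "vpos n (App f e) M" "Nd c 0 M 0" for n M c
  proof -
    from that(1) have "vpos (Suc n) f M" by (auto elim: vposAppE)
    with pA that(2) obtain M' where "vpos (Suc n) f' M'" "Nd c 0 M' 0" by blast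
    then show ?thesis by (auto intro: vpA)
  qed
  show ?case using H V by blast
next
  case (pR A1 A2 K N A1' N' A2' b b')
  have vN: "vpos 0 (plug A1 (Lam N)) N" using ans_vpos0 pR(1) by blast
  have vb: "vpos 0 (plug A2 (Lam b)) b" using ans_vpos0 pR(2) by blast
  have H: False if "Nd a c (App (plug A1 (Lam N)) (plug A2 (Lam b))) i" for a c i
    using NdApp_inv[OF that]
  proof
    assume "Nd a (Suc c) (plug A1 (Lam N)) i"
    then show False using vpos_Nd_conflict[OF vN pR(3)] by blast
  next
    assume "\<exists>M. vpos 0 (plug A1 (Lam N)) M \<and> Nd c 0 M 0 \<and> Nd 0 0 (plug A2 (Lam b)) i"
    then show False using answer_not_needed[OF vb, of 0 0] by auto
  qed
  have V: False if "vpos n (App (plug A1 (Lam N)) (plug A2 (Lam b))) M" "Nd c 0 M 0" for n M c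
  proof -
    from that(1) have "vpos (Suc n) (plug A1 (Lam N)) M" by (auto elim: vposAppE)
    then have "vpos n N M" using vpos_split[OF vN, of n M] by simp
    then show False using vpos_Nd_conflict[OF _ that(2) pR(3)] by blast
  qed
  show ?case using H V by blast
qed auto

lemma par_Nd: "par K t t' \<Longrightarrow> Nd a c t i \<Longrightarrow> Nd a c t' i"
  using par_Nd_aux by blast


fun avK :: "nat \<Rightarrow> ctx \<Rightarrow> nat" where
  "avK K Hole = K"
| "avK K (CLam C) = avK (K - 1) C"
| "avK K (CAppL C t) = avK (Suc K) C"
| "avK K (CAppR t C) = avK 0 C"

lemma avK_compose[simp]: "avK K (compose C D) = avK (avK K C) D"
  by (induction C arbitrary: K) auto

lemma ans_avK: "ans A \<Longrightarrow> avK K A = K"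
  by (induction arbitrary: K rule: ans.induct) auto

lemma ctx_decomp: "outk K Q \<Longrightarrow> m \<le> avK K C \<Longrightarrow> \<exists>C' Au. compose Q C = compose C' Au \<and> outk m Au"
proof (induction C arbitrary: K Q)
  case Hole
  have "m \<le> K" using Hole.prems(2) by simp
  from outk_split[OF Hole.prems(1) this] obtain P1 P2 l where "Q = compose P1 P2" "outk m P2" by blast
  then show ?case by auto
next
  case (CAppL C e)
  have "outk (Suc K) (compose Q (CAppL Hole e))" using outk_snoc CAppL by blast
  with CAppL.IH[of "Suc K" "compose Q (CAppL Hole e)"] CAppL.prems show ?case by auto
next
  case (CLam C)
  show ?case
  proof (cases K)
    case 0
    with CLam have Q: "Q = Hole" using outk0 by simp
    from CLam.IH[of 0 Hole] CLam.prems 0 outk.ok0 obtain C' Au where "C = compose C' Au" "outk m Au" by auto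
    then show ?thesis using Q by (intro exI[of _ "CLam C'"] exI[of _ Au]) auto
  next
    case (Suc K')
    from outk_close[OF CLam.prems(1) Suc] obtain R Q' where RQ: "ans R" "compose Q (CLam Hole) = compose R Q'" "outk K' Q'"
      by blast
    from CLam.IH[OF RQ(3)] CLam.prems Suc obtain C' Au where H: "compose Q' C = compose C' Au" "outk m Au" by auto
    have "compose Q (CLam C) = compose (compose Q (CLam Hole)) C" by simp
    also have "\<dots> = compose R (compose Q' C)" using RQ(2) by simp
    also have "\<dots> = compose (compose R C') Au" using H by simp
    finally show ?thesis using H by blast
  qed
next
  case (CAppR t C)
  from CAppR.IH[of 0 Hole] CAppR.prems outk.ok0 obtain C' Au where "C = compose C' Au" "outk m Au" by auto
  then show ?case by (intro exI[of _ "compose Q (CAppR t C')"] exI[of _ Au]) auto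
qed

lemma step_plug: "step e e' \<Longrightarrow> step (plug C e) (plug C e')"
  by (induction C) (auto intro: step.intros)

lemma mstep_plug: "mstep e e' \<Longrightarrow> mstep (plug C e) (plug C e')"
  unfolding mstep_def by (induction rule: rtranclp_induct) (auto intro: rtranclp.rtrancl_into_rtrancl step_plug)

lemma mstep_trans: "mstep a b \<Longrightarrow> mstep b c \<Longrightarrow> mstep a c"
  unfolding mstep_def by auto

lemma step_mstep: "step a b \<Longrightarrow> mstep a b"
  unfolding mstep_def by auto

lemma mstep_refl: "mstep a a"
  unfolding mstep_def by auto

lemma par_mstep_aux:
  "(par K t t' \<longrightarrow> (\<forall>C. K \<le> avK 0 C \<longrightarrow> mstep (plug C t) (plug C t'))) \<and>
   (parc A A' \<longrightarrow> (\<forall>C X. mstep (plug C (plug A X)) (plug C (plug A' X))))"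
proof (induction rule: par_parc.induct)
  case (pV K i) then show ?case by (simp add: mstep_refl)
next
  case (pL K b b')
  show ?case
  proof (intro allI impI)
    fix C assume "K \<le> avK 0 C"
    then have "K - 1 \<le> avK 0 (compose C (CLam Hole))" by simp
    with pL show "mstep (plug C (Lam b)) (plug C (Lam b'))" by fastforce
  qed
next
  case (pA K f f' e e')
  show ?case
  proof (intro allI impI)
    fix C assume "K \<le> avK 0 C"
    then have "Suc K \<le> avK 0 (compose C (CAppL Hole e))" by simp
    with pA(3)[rule_format, of "compose C (CAppL Hole e)"] have 1: "mstep (plug C (App f e)) (plug C (App f' e))" by simp
    have 2: "mstep (plug C (App f' e)) (plug C (App f' e'))"
      using pA(4)[rule_format, of "compose C (CAppR f' Hole)"] by simp
    from 1 2 show "mstep (plug C (App f e)) (plug C (App f' e'))" by (rule mstep_trans)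
  qed
next
  case (pR A1 A2 K N A1' N' A2' b b')
  have a1': "ans A1'" using parc_ans pR by blast
  have a2': "ans A2'" using parc_ans pR by blast
  show ?case
  proof (intro allI impI)
    fix C assume CK: "K \<le> avK 0 C"
    let ?a = "plug A2 (Lam b)"
    have 1: "mstep (plug C (App (plug A1 (Lam N)) ?a)) (plug C (App (plug A1' (Lam N)) ?a))"
      using pR(8)[rule_format, of "compose C (CAppL Hole ?a)" "Lam N"] by simp
    have "K \<le> avK 0 (compose C (CAppL (compose A1' (CLam Hole)) ?a))" using CK ans_avK[OF a1'] by simp
    then have 2: "mstep (plug C (App (plug A1' (Lam N)) ?a)) (plug C (App (plug A1' (Lam N')) ?a))"
      using pR(9) by fastforce
    let ?f = "plug A1' (Lam N')"
    have 3: "mstep (plug C (App ?f ?a)) (plug C (App ?f (plug A2' (Lam b))))"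
      using pR(10)[rule_format, of "compose C (CAppR ?f Hole)" "Lam b"] by simp
    have 4: "mstep (plug C (App ?f (plug A2' (Lam b)))) (plug C (App ?f (plug A2' (Lam b'))))"
      using pR(11)[rule_format, of "compose C (CAppR ?f (compose A2' (CLam Hole)))"] by simp
    have NdN': "Nd K 0 N' 0" using par_Nd[OF pR(5) pR(3)] .
    from Nd_grammar[OF NdN', of 0 Hole] outk.ok0 obtain Ad E m where G: "m \<le> K" "ink m Ad" "ectx E"
      "N' = plug Ad (plug E (Var (nb Ad + nb E)))" by auto
    from ctx_decomp[OF outk.ok0, of m C] G(1) CK obtain C' Au where D: "compose Hole C = compose C' Au" "outk m Au"
      by fastforce
    have "beta_need (plug Au (App (plug A1' (Lam N')) (plug A2' (Lam b')))) (plug Au (contract A1' A2' N' b'))"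
      unfolding contract_def G(4)
      by (rule beta_need.intros[OF outk_outer[OF D(2)] a1' ink_inner[OF G(2)] G(3) a2' outk_ink_ans[OF D(2) G(2)]])
    then have "step (plug C' (plug Au (App (plug A1' (Lam N')) (plug A2' (Lam b'))))) (plug C' (plug Au (contract A1' A2' N' b')))"
      by (intro step_plug step.intros)
    then have 5: "mstep (plug C (App ?f (plug A2' (Lam b')))) (plug C (contract A1' A2' N' b'))"
      using D(1) by (simp add: step_mstep)
    show "mstep (plug C (App (plug A1 (Lam N)) (plug A2 (Lam b)))) (plug C (contract A1' A2' N' b'))"
      using 1 2 3 4 5 by (blast intro: mstep_trans)
  qed
next
  case cH then show ?case by (simp add: mstep_refl)
next
  case (cL C C')
  show ?case
  proof (intro allI)
    fix C0 X show "mstep (plug C0 (plug (CLam C) X)) (plug C0 (plug (CLam C') X))"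
      using cL(2)[rule_format, of "compose C0 (CLam Hole)" X] by simp
  qed
next
  case (cA C C' e e')
  show ?case
  proof (intro allI)
    fix C0 X
    have 1: "mstep (plug C0 (App (plug C X) e)) (plug C0 (App (plug C' X) e))"
      using cA(3)[rule_format, of "compose C0 (CAppL Hole e)" X] by simp
    have 2: "mstep (plug C0 (App (plug C' X) e)) (plug C0 (App (plug C' X) e'))"
      using cA(4)[rule_format, of "compose C0 (CAppR (plug C' X) Hole)"] by simp
    from 1 2 show "mstep (plug C0 (plug (CAppL C e) X)) (plug C0 (plug (CAppL C' e') X))"
      by (simp add: mstep_trans)
  qed
qed

lemma wb_cshift: "wb n W \<Longrightarrow> wb n (cshift d k W)"
  by (induction arbitrary: k rule: wb.induct) (auto intro: wb.intros)
lemma wb_csubst: "wb n W \<Longrightarrow> wb n (csubst W k u)"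
  by (induction arbitrary: k u rule: wb.induct) (auto intro: wb.intros)
lemma wb_vpos: "wb n W \<Longrightarrow> vpos n (plug W (Lam M)) M"
  by (induction arbitrary: M rule: wb.induct) (auto intro: vpos.intros)


lemma ans_cshift: "ans A \<Longrightarrow> ans (cshift d k A)"
  by (induction arbitrary: k rule: ans.induct) (auto simp: cshift_compose intro: ans.intros)
lemma ans_csubst: "ans A \<Longrightarrow> ans (csubst A k u)"
  by (induction arbitrary: k u rule: ans.induct) (auto simp: csubst_compose intro: ans.intros)

lemma vpos_shift: "vpos n t M \<Longrightarrow> \<exists>k'. k < k' \<and> vpos n (shift d k t) (shift d k' M)"
proof -
  assume "vpos n t M"
  from vpos_wb[OF this] obtain W where W: "wb n W" "t = plug W (Lam M)" by blast
  have "shift d k t = plug (cshift d k W) (Lam (shift d (Suc (k + nb W)) M))" using W by (simp add: shift_plug)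
  then show ?thesis using wb_vpos[OF wb_cshift[OF W(1)]] by (intro exI[of _ "Suc (k + nb W)"]) auto
qed

lemma vpos_subst: "vpos n t M \<Longrightarrow> \<exists>k' u'. k < k' \<and> vpos n (subst t k u) (subst M k' u')"
proof -
  assume "vpos n t M"
  from vpos_wb[OF this] obtain W where W: "wb n W" "t = plug W (Lam M)" by blast
  have "subst t k u = plug (csubst W k u) (Lam (subst M (Suc (k + nb W)) (shift 1 0 (shift (nb W) 0 u))))"
    using W by (simp add: subst_plug)
  then show ?thesis using wb_vpos[OF wb_csubst[OF W(1)]] by (intro exI[of _ "Suc (k + nb W)"]) auto
qed

lemma Nd_shift: "Nd a c t i \<Longrightarrow> Nd a c (shift d k t) (if k \<le> i then i + d else i)"
proof (induction arbitrary: k rule: Nd.induct)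
  case (NV a c i) then show ?case by (auto intro: Nd.NV)
next
  case (NAL a c f i e) then show ?case using Nd.NAL[OF NAL.IH[of k]] by simp
next
  case (NL1 a c b i)
  from NL1.IH[of "Suc k"] show ?case by (auto intro: Nd.NL1 split: if_splits)
next
  case (NL2 a b i)
  from NL2.IH[of "Suc k"] show ?case by (auto intro: Nd.NL2 split: if_splits)
next
  case (NAR f M c e i a)
  from vpos_shift[OF NAR.hyps(1), of k d] obtain k' where k': "k < k'" "vpos 0 (shift d k f) (shift d k' M)" by blast
  have "Nd c 0 (shift d k' M) 0" using NAR.IH(1)[of k'] k' by simp
  then show ?case using NAR.IH(2)[of k] k' by (auto intro: Nd.NAR)
qed

lemma Nd_subst: "Nd a c t i \<Longrightarrow> i \<noteq> k \<Longrightarrow> Nd a c (subst t k u) (if k < i then i - 1 else i)"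
proof (induction arbitrary: k u rule: Nd.induct)
  case (NV a c i) then show ?case by (auto intro: Nd.NV)
next
  case (NAL a c f i e) then show ?case using Nd.NAL[OF NAL.IH[of k u]] by simp
next
  case (NL1 a c b i)
  from NL1.IH[of "Suc k" "shift 1 0 u"] NL1.prems show ?case
    by (cases i) (auto intro: Nd.NL1 split: if_splits)
next
  case (NL2 a b i)
  from NL2.IH[of "Suc k" "shift 1 0 u"] NL2.prems show ?case
    by (cases i) (auto intro: Nd.NL2 split: if_splits)
next
  case (NAR f M c e i a)
  from vpos_subst[OF NAR.hyps(1), of k u] obtain k' u' where k': "k < k'" "vpos 0 (subst f k u) (subst M k' u')" by blast
  have "Nd c 0 (subst M k' u') 0" using NAR.IH(1)[of k' u'] k' by simp
  then show ?case using NAR.IH(2)[of k u] NAR.prems k' by (auto intro: Nd.NAR)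
qed

lemma ans_wb_compose: "ans A \<Longrightarrow> wb n W \<Longrightarrow> wb n (compose A W)"
proof (induction arbitrary: n W rule: ans.induct)
  case 1 then show ?case by simp
next
  case (2 A1 A2 e)
  have "wb n (compose A2 W)" using 2 by blast
  then have "wb (Suc n) (CLam (compose A2 W))" by (rule wbL)
  then have "wb (Suc n) (compose A1 (CLam (compose A2 W)))" using 2 by blast
  then show ?case by (simp add: wbA)
qed

lemma ans_wb: "ans A \<Longrightarrow> wb 0 A"
  using ans_wb_compose[of A 0 Hole] wb0 by simp

lemma contract_shift:
  "shift d c (contract A1 A2 N b) =
   contract (cshift d c A1) (cshift d c A2) (shift d (c + nb A1 + 1) N) (shift d (c + nb A2 + 1) b)"
proof -
  define n1 where "n1 = nb A1"
  define n2 where "n2 = nb A2"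
  have e1: "cshift d (c + n1) (cshift n1 0 A2) = cshift n1 0 (cshift d c A2)"
    using cshift_cshift_comm[of 0 c n1 d A2] by simp
  have core: "shift d (c + n1 + n2) (subst (shift n2 1 N) 0 (shift n1 n2 (Lam b))) =
     subst (shift n2 1 (shift d (c + n1 + 1) N)) 0 (shift n1 n2 (Lam (shift d (c + n2 + 1) b)))"
  proof -
    have "shift d (c + n1 + n2) (subst (shift n2 1 N) 0 (shift n1 n2 (Lam b))) =
          subst (shift d (Suc (c + n1 + n2)) (shift n2 1 N)) 0 (shift d (c + n1 + n2) (shift n1 n2 (Lam b)))"
      by (rule shift_subst_lt) simp
    also have "shift d (Suc (c + n1 + n2)) (shift n2 1 N) = shift n2 1 (shift d (c + n1 + 1) N)"
      using shift_shift_comm[of 1 "c + n1 + 1" n2 d N] by (simp add: add.commute add.left_commute)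
    also have "shift d (c + n1 + n2) (shift n1 n2 (Lam b)) = shift n1 n2 (shift d (c + n2) (Lam b))"
      using shift_shift_comm[of n2 "c + n2" n1 d "Lam b"] by (simp add: add.commute add.left_commute)
    also have "shift d (c + n2) (Lam b) = Lam (shift d (c + n2 + 1) b)" by simp
    finally show ?thesis .
  qed
  show ?thesis unfolding contract_def n1_def[symmetric] n2_def[symmetric]
    by (simp only: shift_plug nb_cshift e1 core n1_def[symmetric] n2_def[symmetric])
qed

lemma contract_subst:
  "subst (contract A1 A2 N b) k u =
   contract (csubst A1 k u) (csubst A2 k u) (subst N (k + nb A1 + 1) (shift (nb A1 + 1) 0 u))
            (subst b (k + nb A2 + 1) (shift (nb A2 + 1) 0 u))"
proof -
  define n1 where "n1 = nb A1"
  define n2 where "n2 = nb A2"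
  have e1: "csubst (cshift n1 0 A2) (k + n1) (shift n1 0 u) = cshift n1 0 (csubst A2 k u)"
    using csubst_cshift[of 0 k n1 A2 u] by simp
  define U where "U = shift n2 0 (shift n1 0 u)"
  have U1: "U = shift (n1 + n2) 0 u" unfolding U_def using shift_shift_add[of 0 0 n1 n2 u] by simp
  have core: "subst (subst (shift n2 1 N) 0 (shift n1 n2 (Lam b))) (k + n1 + n2) U =
     subst (shift n2 1 (subst N (k + n1 + 1) (shift (n1 + 1) 0 u))) 0
       (shift n1 n2 (Lam (subst b (k + n2 + 1) (shift (n2 + 1) 0 u))))"
  proof -
    have "subst (subst (shift n2 1 N) 0 (shift n1 n2 (Lam b))) (k + n1 + n2) U =
          subst (subst (shift n2 1 N) (Suc (k + n1 + n2)) (shift 1 0 U)) 0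
                (subst (shift n1 n2 (Lam b)) (k + n1 + n2) U)"
      by (rule subst_subst) simp
    also have "shift 1 0 U = shift n2 1 (shift (n1 + 1) 0 u)"
      unfolding U1 using shift_shift_add[of 0 1 "n1 + 1" n2 u] shift_shift_add[of 0 0 "n1 + n2" 1 u]
      by (simp add: add.commute add.left_commute)
    also have "subst (shift n2 1 N) (Suc (k + n1 + n2)) (shift n2 1 (shift (n1 + 1) 0 u)) =
               shift n2 1 (subst N (k + n1 + 1) (shift (n1 + 1) 0 u))"
      using shift_subst_ge[of 1 "k + n1 + 1" n2 N "shift (n1 + 1) 0 u"]
      by (simp add: add.commute add.left_commute)
    also have "subst (shift n1 n2 (Lam b)) (k + n1 + n2) U =
               shift n1 n2 (subst (Lam b) (k + n2) (shift n2 0 u))"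
    proof -
      have "U = shift n1 n2 (shift n2 0 u)"
        unfolding U1 using shift_shift_add[of 0 n2 n2 n1 u] by (simp add: add.commute)
      then show ?thesis using shift_subst_ge[of n2 "k + n2" n1 "Lam b" "shift n2 0 u"]
        by (simp add: add.commute add.left_commute)
    qed
    also have "subst (Lam b) (k + n2) (shift n2 0 u) = Lam (subst b (k + n2 + 1) (shift (n2 + 1) 0 u))"
      using shift_shift0[of n2 u] by simp
    finally show ?thesis .
  qed
  show ?thesis unfolding contract_def n1_def[symmetric] n2_def[symmetric]
    by (simp only: subst_plug nb_cshift nb_csubst e1 U_def[symmetric] core n1_def[symmetric] n2_def[symmetric])
qed

lemma shift_shift0s: "shift (Suc 0) 0 (shift n 0 u) = shift (Suc n) 0 u"
  using shift_shift0 by simp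

lemma par_shift_aux:
  "(par K t t' \<longrightarrow> (\<forall>d c. par K (shift d c t) (shift d c t'))) \<and>
   (parc C C' \<longrightarrow> (\<forall>d c. parc (cshift d c C) (cshift d c C')))"
proof (induction rule: par_parc.induct)
  case (pV K i) then show ?case by (auto intro: par_parc.intros)
next
  case (pL K b b') then show ?case by (auto intro: par_parc.intros)
next
  case (pA K f f' e e') then show ?case by (auto intro: par_parc.intros)
next
  case (pR A1 A2 K N A1' N' A2' b b')
  show ?case
  proof (intro allI)
    fix d c
    have n1: "nb A1' = nb A1" using parc_nb pR(4) by blast
    have n2: "nb A2' = nb A2" using parc_nb pR(6) by blast
    have Nd: "Nd K 0 (shift d (Suc (c + nb A1)) N) 0" using Nd_shift[OF pR(3), of d "Suc (c + nb A1)"] by simp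
    have "par K (App (plug (cshift d c A1) (Lam (shift d (Suc (c + nb A1)) N))) (plug (cshift d c A2) (Lam (shift d (Suc (c + nb A2)) b))))
       (contract (cshift d c A1') (cshift d c A2') (shift d (Suc (c + nb A1)) N') (shift d (Suc (c + nb A2)) b'))"
      using pR ans_cshift Nd by (intro par_parc.pR) auto
    then show "par K (shift d c (App (plug A1 (Lam N)) (plug A2 (Lam b)))) (shift d c (contract A1' A2' N' b'))"
      by (simp add: shift_plug contract_shift n1 n2)
  qed
qed (auto intro: par_parc.intros)

lemma par_shift: "par K t t' \<Longrightarrow> par K (shift d c t) (shift d c t')"
  using par_shift_aux by blast
lemma parc_cshift: "parc C C' \<Longrightarrow> parc (cshift d c C) (cshift d c C')"
  using par_shift_aux by blast

lemma par_subst_aux: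
  "(par K t t' \<longrightarrow> (\<forall>k u u'. par 0 u u' \<longrightarrow> par K (subst t k u) (subst t' k u'))) \<and>
   (parc C C' \<longrightarrow> (\<forall>k u u'. par 0 u u' \<longrightarrow> parc (csubst C k u) (csubst C' k u')))"
proof (induction rule: par_parc.induct)
  case (pV K i) then show ?case by (auto intro: par_parc.intros par_mono)
next
  case (pL K b b')
  show ?case
  proof (intro allI impI)
    fix k u u' assume "par 0 u u'"
    then have "par 0 (shift 1 0 u) (shift 1 0 u')" by (rule par_shift)
    with pL have "par (K - 1) (subst b (Suc k) (shift 1 0 u)) (subst b' (Suc k) (shift 1 0 u'))" by blast
    then show "par K (subst (Lam b) k u) (subst (Lam b') k u')" by (simp add: par_parc.pL)
  qed
next
  case (pA K f f' e e') then show ?case by (auto intro: par_parc.intros)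
next
  case (pR A1 A2 K N A1' N' A2' b b')
  show ?case
  proof (intro allI impI)
    fix k u u' assume uu: "par 0 u u'"
    have n1: "nb A1' = nb A1" using parc_nb pR(4) by blast
    have n2: "nb A2' = nb A2" using parc_nb pR(6) by blast
    let ?W1 = "shift (Suc (nb A1)) 0 u" and ?W1' = "shift (Suc (nb A1)) 0 u'"
    let ?W2 = "shift (Suc (nb A2)) 0 u" and ?W2' = "shift (Suc (nb A2)) 0 u'"
    have Nd: "Nd K 0 (subst N (Suc (k + nb A1)) ?W1) 0" using Nd_subst[OF pR(3), of "Suc (k + nb A1)" ?W1] by simp
    have w1: "par 0 ?W1 ?W1'" and w2: "par 0 ?W2 ?W2'" using par_shift uu by auto
    have "par K (App (plug (csubst A1 k u) (Lam (subst N (Suc (k + nb A1)) ?W1))) (plug (csubst A2 k u) (Lam (subst b (Suc (k + nb A2)) ?W2))))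
       (contract (csubst A1' k u') (csubst A2' k u') (subst N' (Suc (k + nb A1)) ?W1') (subst b' (Suc (k + nb A2)) ?W2'))"
      using pR ans_csubst Nd uu w1 w2 by (intro par_parc.pR) auto
    then show "par K (subst (App (plug A1 (Lam N)) (plug A2 (Lam b))) k u) (subst (contract A1' A2' N' b') k u')"
      by (simp add: subst_plug contract_subst n1 n2 shift_shift0s)
  qed
next
  case (cL C C')
  show ?case
  proof (intro allI impI)
    fix k u u' assume "par 0 u u'"
    then have "par 0 (shift 1 0 u) (shift 1 0 u')" by (rule par_shift)
    with cL have "parc (csubst C (Suc k) (shift 1 0 u)) (csubst C' (Suc k) (shift 1 0 u'))" by blast
    then show "parc (csubst (CLam C) k u) (csubst (CLam C') k u')" by (simp add: par_parc.cL)
  qed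
qed (auto intro: par_parc.intros par_shift)

lemma par_subst: "par K t t' \<Longrightarrow> par 0 u u' \<Longrightarrow> par K (subst t k u) (subst t' k u')"
  using par_subst_aux by blast

lemma contract_par:
  assumes "ans A1" "ans A2" "parc A1 A1'" "parc A2 A2'" "par K N N'" "par 0 b b'"
  shows "par K (contract A1 A2 N b) (contract A1' A2' N' b')"
proof -
  have n1: "nb A1' = nb A1" using parc_nb assms(3) by blast
  have n2: "nb A2' = nb A2" using parc_nb assms(4) by blast
  have "par 0 (Lam b) (Lam b')" using assms(6) by (intro pL) simp
  then have v: "par 0 (shift (nb A1) (nb A2) (Lam b)) (shift (nb A1) (nb A2) (Lam b'))" by (rule par_shift)
  have "par K (shift (nb A2) 1 N) (shift (nb A2) 1 N')" using assms(5) by (rule par_shift)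
  then have y: "par K (subst (shift (nb A2) 1 N) 0 (shift (nb A1) (nb A2) (Lam b)))
                      (subst (shift (nb A2) 1 N') 0 (shift (nb A1) (nb A2) (Lam b')))"
    using v by (rule par_subst)
  have "par K (plug (cshift (nb A1) 0 A2) (subst (shift (nb A2) 1 N) 0 (shift (nb A1) (nb A2) (Lam b))))
              (plug (cshift (nb A1) 0 A2') (subst (shift (nb A2) 1 N') 0 (shift (nb A1) (nb A2) (Lam b'))))"
    using par_plug_ans[OF ans_cshift[OF assms(2)] parc_cshift[OF assms(4)] y] .
  then show ?thesis unfolding contract_def using par_plug_ans[OF assms(1) assms(3)] n1 n2 by simp
qed

lemma par_VarE: "par K (Var i) t' \<Longrightarrow> t' = Var i"
  by (auto elim: par.cases)

lemma par_LamE: "par K (Lam b) t' \<Longrightarrow> \<exists>b'. t' = Lam b' \<and> par (K - 1) b b'"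
  by (auto elim: par.cases)

lemma par_AppE: assumes "par K (App f e) t'" shows "
  (\<exists>f' e'. t' = App f' e' \<and> par (Suc K) f f' \<and> par 0 e e') \<or>
  (\<exists>A1 A2 N b A1' A2' N' b'. ans A1 \<and> ans A2 \<and> Nd K 0 N 0 \<and> parc A1 A1' \<and> par K N N' \<and>
     parc A2 A2' \<and> par 0 b b' \<and> f = plug A1 (Lam N) \<and> e = plug A2 (Lam b) \<and> t' = contract A1' A2' N' b')"
  using assms
proof (cases rule: par.cases)
  case (pA f' e') then show ?thesis by blast
next
  case (pR A1 A2 N A1' N' A2' b b') then show ?thesis by blast
qed

lemma wb_plug_inj: "wb n A \<Longrightarrow> wb n B \<Longrightarrow> plug A (Lam M) = plug B (Lam M') \<Longrightarrow> A = B \<and> M = M'"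
proof (induction A arbitrary: n B)
  case Hole
  then have n: "n = 0" by (auto elim: wb.cases)
  show ?case
  proof (cases B)
    case Hole then show ?thesis using Hole.prems by simp
  next
    case (CLam B') then show ?thesis using Hole.prems n by (auto elim: wb.cases)
  qed (use Hole.prems in auto)
next
  case (CLam A')
  from CLam.prems(1) obtain n' where n': "n = Suc n'" "wb n' A'" by (auto elim: wb.cases)
  show ?case
  proof (cases B)
    case Hole then show ?thesis using CLam.prems n' by (auto elim: wb.cases)
  next
    case (CLam B')
    with CLam.prems n' have "wb n' B'" "plug A' (Lam M) = plug B' (Lam M')" by (auto elim: wb.cases)
    with CLam.IH n' CLam show ?thesis by blast
  qed (use CLam.prems in auto)
next
  case (CAppL A' e)
  from CAppL.prems(1) have a: "wb (Suc n) A'" by (auto elim: wb.cases)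
  show ?case
  proof (cases B)
    case (CAppL B' e')
    with CAppL.prems have "wb (Suc n) B'" "plug A' (Lam M) = plug B' (Lam M')" "e = e'" by (auto elim: wb.cases)
    with CAppL.IH a CAppL show ?thesis by blast
  qed (use CAppL.prems in \<open>auto elim: wb.cases\<close>)
next
  case (CAppR t A')
  then show ?case by (auto elim: wb.cases)
qed

lemma INV: "wb n W \<Longrightarrow> par K (plug W (Lam M)) t' \<Longrightarrow> (K \<le> n \<or> (\<exists>c. Nd c 0 M 0)) \<Longrightarrow>
  \<exists>W' M'. t' = plug W' (Lam M') \<and> parc W W' \<and> par (avK K (compose W (CLam Hole))) M M'"
proof (induction W arbitrary: n K t')
  case Hole
  from par_LamE[of K M t'] Hole.prems(2) obtain M' where "t' = Lam M'" "par (K - 1) M M'" by auto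
  then show ?case using cH by (intro exI[of _ Hole] exI[of _ M']) auto
next
  case (CLam W1)
  from CLam.prems(1) obtain n1 where n1: "n = Suc n1" "wb n1 W1" by (auto elim: wb.cases)
  from par_LamE[of K "plug W1 (Lam M)" t'] CLam.prems(2) obtain t1 where t1: "t' = Lam t1" "par (K - 1) (plug W1 (Lam M)) t1"
    by auto
  have "K - 1 \<le> n1 \<or> (\<exists>c. Nd c 0 M 0)" using CLam.prems(3) n1 by auto
  from CLam.IH[OF n1(2) t1(2) this] obtain W' M' where "t1 = plug W' (Lam M')" "parc W1 W'"
    "par (avK (K - 1) (compose W1 (CLam Hole))) M M'" by blast
  then show ?case using t1 by (intro exI[of _ "CLam W'"] exI[of _ M']) (auto intro: cL)
next
  case (CAppL W1 e)
  from CAppL.prems(1) have w1: "wb (Suc n) W1" by (auto elim: wb.cases)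
  have "par K (App (plug W1 (Lam M)) e) t'" using CAppL.prems(2) by simp
  from par_AppE[OF this]
  show ?case
  proof (elim disjE exE conjE)
    fix f' e' assume h: "t' = App f' e'" "par (Suc K) (plug W1 (Lam M)) f'" "par 0 e e'"
    have "Suc K \<le> Suc n \<or> (\<exists>c. Nd c 0 M 0)" using CAppL.prems(3) by auto
    from CAppL.IH[OF w1 h(2) this] obtain W' M' where "f' = plug W' (Lam M')" "parc W1 W'"
      "par (avK (Suc K) (compose W1 (CLam Hole))) M M'" by blast
    then show ?thesis using h by (intro exI[of _ "CAppL W' e'"] exI[of _ M']) (auto intro: cA)
  next
    fix A1 A2 N b A1' A2' N' b'
    assume h: "ans A1" "Nd K 0 N 0" "plug W1 (Lam M) = plug A1 (Lam N)"
    have "vpos 0 (plug W1 (Lam M)) N" using ans_vpos0[OF h(1)] h(3) by simp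
    moreover have "vpos (0 + n + 1) (plug W1 (Lam M)) M" using wb_vpos[OF w1] by simp
    ultimately have vN: "vpos n N M" by (rule vpos_split)
    show ?thesis using CAppL.prems(3)
    proof
      assume "K \<le> n"
      have False using answer_not_needed[OF vN _ h(2)] \<open>K \<le> n\<close> by simp
      then show ?thesis ..
    next
      assume "\<exists>c. Nd c 0 M 0" then show ?thesis using vpos_Nd_conflict[OF vN _ h(2)] by blast
    qed
  qed
next
  case (CAppR t W1)
  then show ?case by (auto elim: wb.cases)
qed

definition isredex :: "nat \<Rightarrow> trm \<Rightarrow> bool" where
  "isredex K t \<longleftrightarrow> (\<exists>A1 N A2 b. ans A1 \<and> ans A2 \<and> Nd K 0 N 0 \<and> t = App (plug A1 (Lam N)) (plug A2 (Lam b)))"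

inductive cd :: "nat \<Rightarrow> trm \<Rightarrow> trm \<Rightarrow> bool" and cdc :: "ctx \<Rightarrow> ctx \<Rightarrow> bool" where
  dV: "cd K (Var i) (Var i)"
| dL: "cd (K - 1) b b' \<Longrightarrow> cd K (Lam b) (Lam b')"
| dA: "\<not> isredex K (App f e) \<Longrightarrow> cd (Suc K) f f' \<Longrightarrow> cd 0 e e' \<Longrightarrow> cd K (App f e) (App f' e')"
| dR: "ans A1 \<Longrightarrow> ans A2 \<Longrightarrow> Nd K 0 N 0 \<Longrightarrow> cdc A1 A1' \<Longrightarrow> cd K N N' \<Longrightarrow> cdc A2 A2' \<Longrightarrow> cd 0 b b' \<Longrightarrow>
       cd K (App (plug A1 (Lam N)) (plug A2 (Lam b))) (contract A1' A2' N' b')"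
| eH: "cdc Hole Hole"
| eL: "cdc C C' \<Longrightarrow> cdc (CLam C) (CLam C')"
| eA: "cdc C C' \<Longrightarrow> cd 0 e e' \<Longrightarrow> cdc (CAppL C e) (CAppL C' e')"

lemma size_plug: "size t \<le> size (plug C t)"
  by (induction C) auto

lemma cdc_exists: "wb n C \<Longrightarrow> (\<forall>s. size s < size (plug C X) \<longrightarrow> (\<exists>s'. cd 0 s s')) \<Longrightarrow> \<exists>C'. cdc C C'"
proof (induction C arbitrary: n)
  case Hole then show ?case using eH by blast
next
  case (CLam C)
  from CLam.prems(1) obtain n' where "wb n' C" by (auto elim: wb.cases)
  with CLam.IH CLam.prems(2) obtain C' where "cdc C C'" by fastforce
  then show ?case using eL by blast
next
  case (CAppL C e)
  from CAppL.prems(1) have "wb (Suc n) C" by (auto elim: wb.cases)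
  with CAppL.IH CAppL.prems(2) obtain C' where "cdc C C'" by fastforce
  moreover from CAppL.prems(2) obtain e' where "cd 0 e e'" by fastforce
  ultimately show ?case using eA by blast
next
  case (CAppR t C) then show ?case by (auto elim: wb.cases)
qed

lemma cd_exists: "\<exists>t'. cd K t t'"
proof (induction "size t" arbitrary: t K rule: less_induct)
  case less
  show ?case
  proof (cases t)
    case (Var i) then show ?thesis using dV by blast
  next
    case (Lam b)
    with less.hyps[of b "K - 1"] obtain b' where "cd (K - 1) b b'" by auto
    then show ?thesis using Lam dL by blast
  next
    case (App f e)
    show ?thesis
    proof (cases "isredex K t")
      case True
      then obtain A1 N A2 b where R: "ans A1" "ans A2" "Nd K 0 N 0" "t = App (plug A1 (Lam N)) (plug A2 (Lam b))"
        unfolding isredex_def by blast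
      have s1: "size (plug A1 (Lam N)) < size t" and s2: "size (plug A2 (Lam b)) < size t" using R(4) by auto
      have sN: "size N < size t" using s1 size_plug[of "Lam N" A1] by simp
      have sb: "size b < size t" using s2 size_plug[of "Lam b" A2] by simp
      obtain A1' where "cdc A1 A1'"
        using cdc_exists[OF ans_wb[OF R(1)], of "Lam N"] less.hyps s1 by fastforce
      moreover obtain A2' where "cdc A2 A2'"
        using cdc_exists[OF ans_wb[OF R(2)], of "Lam b"] less.hyps s2 by fastforce
      moreover obtain N' where "cd K N N'" using less.hyps[OF sN] by blast
      moreover obtain b' where "cd 0 b b'" using less.hyps[OF sb] by blast
      ultimately show ?thesis using R dR by blast
    next
      case False
      have "size f < size t" "size e < size t" using App by auto
      with less.hyps obtain f' e' where "cd (Suc K) f f'" "cd 0 e e'" by blast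
      then show ?thesis using False App dA by blast
    qed
  qed
qed

lemma cd_LamE: "cd K (Lam b) t' \<Longrightarrow> \<exists>b'. t' = Lam b' \<and> cd (K - 1) b b'"
  by (auto elim: cd.cases)

lemma cd_AppE: assumes "cd K (App f e) t'" shows "
  (\<not> isredex K (App f e) \<and> (\<exists>f' e'. t' = App f' e' \<and> cd (Suc K) f f' \<and> cd 0 e e')) \<or>
  (\<exists>A1 A2 N b A1' A2' N' b'. ans A1 \<and> ans A2 \<and> Nd K 0 N 0 \<and> cdc A1 A1' \<and> cd K N N' \<and>
     cdc A2 A2' \<and> cd 0 b b' \<and> f = plug A1 (Lam N) \<and> e = plug A2 (Lam b) \<and> t' = contract A1' A2' N' b')"
  using assms
proof (cases rule: cd.cases)
  case (dA f' e') then show ?thesis by blast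
next
  case (dR A1 A2 N A1' N' A2' b b') then show ?thesis by blast
qed

lemma parc_cdc: "wb n C \<Longrightarrow> (\<forall>s. size s < size (plug C X) \<longrightarrow> (\<forall>t' t''. par 0 s t' \<longrightarrow> cd 0 s t'' \<longrightarrow> par 0 t' t''))
   \<Longrightarrow> parc C C1 \<Longrightarrow> cdc C C2 \<Longrightarrow> parc C1 C2"
proof (induction C arbitrary: n C1 C2)
  case Hole
  from Hole.prems(3) have "C1 = Hole" by (auto elim: parc.cases)
  moreover from Hole.prems(4) have "C2 = Hole" by (auto elim: cdc.cases)
  ultimately show ?case using cH by simp
next
  case (CLam C)
  from CLam.prems(1) obtain n' where w: "wb n' C" by (auto elim: wb.cases)
  from CLam.prems(3) obtain D1 where D1: "C1 = CLam D1" "parc C D1" by (auto elim: parc.cases)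
  from CLam.prems(4) obtain D2 where D2: "C2 = CLam D2" "cdc C D2" by (auto elim: cdc.cases)
  have "\<forall>s. size s < size (plug C X) \<longrightarrow> (\<forall>t' t''. par 0 s t' \<longrightarrow> cd 0 s t'' \<longrightarrow> par 0 t' t'')"
  proof (intro allI impI)
    fix s t' t'' assume h: "size s < size (plug C X)" "par 0 s t'" "cd 0 s t''"
    have "size s < size (plug (CLam C) X)" using h(1) by simp
    then show "par 0 t' t''" using CLam.prems(2) h(2,3) by blast
  qed
  then have "parc D1 D2" using CLam.IH[OF w _ D1(2) D2(2)] by blast
  then show ?case using D1 D2 cL by blast
next
  case (CAppL C e)
  from CAppL.prems(1) have w: "wb (Suc n) C" by (auto elim: wb.cases)
  from CAppL.prems(3) obtain D1 e1 where D1: "C1 = CAppL D1 e1" "parc C D1" "par 0 e e1" by (auto elim: parc.cases)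
  from CAppL.prems(4) obtain D2 e2 where D2: "C2 = CAppL D2 e2" "cdc C D2" "cd 0 e e2" by (auto elim: cdc.cases)
  have "\<forall>s. size s < size (plug C X) \<longrightarrow> (\<forall>t' t''. par 0 s t' \<longrightarrow> cd 0 s t'' \<longrightarrow> par 0 t' t'')"
  proof (intro allI impI)
    fix s t' t'' assume h: "size s < size (plug C X)" "par 0 s t'" "cd 0 s t''"
    have "size s < size (plug (CAppL C e) X)" using h(1) by simp
    then show "par 0 t' t''" using CAppL.prems(2) h(2,3) by blast
  qed
  then have "parc D1 D2" using CAppL.IH[OF w _ D1(2) D2(2)] by blast
  moreover have "size e < size (plug (CAppL C e) X)" by simp
  then have "par 0 e1 e2" using CAppL.prems(2) D1(3) D2(3) by blast
  ultimately show ?case using D1 D2 cA by blast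
next
  case (CAppR t C) then show ?case by (auto elim: wb.cases)
qed

lemma par_cd: "par K t t' \<Longrightarrow> cd K t t'' \<Longrightarrow> par K t' t''"
proof (induction "size t" arbitrary: t K t' t'' rule: less_induct)
  case less
  show ?case
  proof (cases t)
    case (Var i)
    then show ?thesis using less.prems by (auto elim: par.cases cd.cases intro: pV)
  next
    case (Lam b)
    from par_LamE[of K b t'] less.prems(1) Lam obtain b1 where b1: "t' = Lam b1" "par (K - 1) b b1" by auto
    from cd_LamE[of K b t''] less.prems(2) Lam obtain b2 where b2: "t'' = Lam b2" "cd (K - 1) b b2" by auto
    have "par (K - 1) b1 b2" using less.hyps[of b] Lam b1 b2 by simp
    then show ?thesis using b1 b2 pL by blast
  next
    case (App f e)
    have IH: "par K' s2 s3" if "size s < size t" "par K' s s2" "cd K' s s3" for s K' s2 s3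
      using less.hyps that by blast
    have pt: "par K (App f e) t'" and ct: "cd K (App f e) t''" using less.prems App by auto
    from par_AppE[OF pt] show ?thesis
    proof (elim disjE exE conjE)
      fix f' e' assume P: "t' = App f' e'" "par (Suc K) f f'" "par 0 e e'"
      from cd_AppE[OF ct] show ?thesis
      proof (elim disjE exE conjE)
        fix f2 e2 assume C: "t'' = App f2 e2" "cd (Suc K) f f2" "cd 0 e e2"
        have "size f < size t" "size e < size t" using App by auto
        then have "par (Suc K) f' f2" "par 0 e' e2" using IH P C by blast+
        then show ?thesis using P C pA by blast
      next
        fix A1 A2 N b A1'' A2'' N'' b''
        assume C: "ans A1" "ans A2" "Nd K 0 N 0" "cdc A1 A1''" "cd K N N''" "cdc A2 A2''" "cd 0 b b''"
          "f = plug A1 (Lam N)" "e = plug A2 (Lam b)" "t'' = contract A1'' A2'' N'' b''"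
        have s1: "size (plug A1 (Lam N)) < size t" and s2: "size (plug A2 (Lam b)) < size t" using C App by auto
        have sN: "size N < size t" using s1 size_plug[of "Lam N" A1] by simp
        have sb: "size b < size t" using s2 size_plug[of "Lam b" A2] by simp
        from INV[OF ans_wb[OF C(1)], of "Suc K" N f'] P(2) C(3,8) obtain W1 N1 where
          W1: "f' = plug W1 (Lam N1)" "parc A1 W1" "par (avK (Suc K) (compose A1 (CLam Hole))) N N1" by blast
        have W1': "par K N N1" using W1(3) ans_avK[OF C(1)] by simp
        from INV[OF ans_wb[OF C(2)], of 0 b e'] P(3) C(9) obtain W2 b1 where
          W2: "e' = plug W2 (Lam b1)" "parc A2 W2" "par (avK 0 (compose A2 (CLam Hole))) b b1" by auto
        have W2': "par 0 b b1" using W2(3) ans_avK[OF C(2)] by simp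
        have "parc W1 A1''"
          by (rule parc_cdc[OF ans_wb[OF C(1)] _ W1(2) C(4), of "Lam N"]) (use IH s1 less_trans in blast)
        moreover have "parc W2 A2''"
          by (rule parc_cdc[OF ans_wb[OF C(2)] _ W2(2) C(6), of "Lam b"]) (use IH s2 less_trans in blast)
        moreover have "par K N1 N''" using IH[OF sN W1' C(5)] .
        moreover have "par 0 b1 b''" using IH[OF sb W2' C(7)] .
        moreover have "Nd K 0 N1 0" using par_Nd[OF W1' C(3)] .
        moreover have "ans W1" "ans W2" using parc_ans C(1,2) W1(2) W2(2) by auto
        ultimately have "par K (App (plug W1 (Lam N1)) (plug W2 (Lam b1))) (contract A1'' A2'' N'' b'')"
          by (intro pR)
        then show ?thesis using P W1 W2 C by simp
      qed
    next
      fix A1 A2 N b A1' A2' N' b'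
      assume P: "ans A1" "ans A2" "Nd K 0 N 0" "parc A1 A1'" "par K N N'" "parc A2 A2'" "par 0 b b'"
        "f = plug A1 (Lam N)" "e = plug A2 (Lam b)" "t' = contract A1' A2' N' b'"
      from cd_AppE[OF ct] show ?thesis
      proof (elim disjE exE conjE)
        assume "\<not> isredex K (App f e)"
        then show ?thesis using P unfolding isredex_def by blast
      next
        fix B1 B2 N2 b2 A1'' A2'' N'' b''
        assume C: "ans B1" "ans B2" "Nd K 0 N2 0" "cdc B1 A1''" "cd K N2 N''" "cdc B2 A2''" "cd 0 b2 b''"
          "f = plug B1 (Lam N2)" "e = plug B2 (Lam b2)" "t'' = contract A1'' A2'' N'' b''"
        have "plug B1 (Lam N2) = plug A1 (Lam N)" using C(8) P(8) by simp
        then have E1: "B1 = A1 \<and> N2 = N" using wb_plug_inj[OF ans_wb[OF C(1)] ans_wb[OF P(1)]] by blast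
        have "plug B2 (Lam b2) = plug A2 (Lam b)" using C(9) P(9) by simp
        then have E2: "B2 = A2 \<and> b2 = b" using wb_plug_inj[OF ans_wb[OF C(2)] ans_wb[OF P(2)]] by blast
        have s1: "size (plug A1 (Lam N)) < size t" and s2: "size (plug A2 (Lam b)) < size t" using P App by auto
        have sN: "size N < size t" using s1 size_plug[of "Lam N" A1] by simp
        have sb: "size b < size t" using s2 size_plug[of "Lam b" A2] by simp
        have c1: "cdc A1 A1''" using C(4) E1 by simp
        have c2: "cdc A2 A2''" using C(6) E2 by simp
        have "parc A1' A1''"
          by (rule parc_cdc[OF ans_wb[OF P(1)] _ P(4) c1, of "Lam N"]) (use C(4) E1 IH s1 less_trans in \<open>simp only: E1 E2, blast\<close>)
        moreover have "parc A2' A2''"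
          by (rule parc_cdc[OF ans_wb[OF P(2)] _ P(6) c2, of "Lam b"]) (use C(6) E2 IH s2 less_trans in \<open>simp only: E1 E2, blast\<close>)
        moreover have "par K N' N''" using IH[OF sN P(5)] C(5) E1 by simp
        moreover have "par 0 b' b''" using IH[OF sb P(7)] C(7) E2 by simp
        moreover have "ans A1'" "ans A2'" using parc_ans P(1,2,4,6) by auto
        ultimately show ?thesis using contract_par P C by blast
      qed
    qed
  qed
qed

lemma par_diamond: "par 0 t t1 \<Longrightarrow> par 0 t t2 \<Longrightarrow> \<exists>t3. par 0 t1 t3 \<and> par 0 t2 t3"
  using cd_exists[of 0 t] par_cd by blast


lemma par0_mstep: "par 0 t t' \<Longrightarrow> mstep t t'"
proof -
  assume h: "par 0 t t'"
  have "\<forall>C. 0 \<le> avK 0 C \<longrightarrow> mstep (plug C t) (plug C t')" using par_mstep_aux h by blast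
  then have "mstep (plug Hole t) (plug Hole t')" by blast
  then show ?thesis by simp
qed


lemma strip: "(par 0)\<^sup>*\<^sup>* t t1 \<Longrightarrow> par 0 t t2 \<Longrightarrow> \<exists>t3. par 0 t1 t3 \<and> (par 0)\<^sup>*\<^sup>* t2 t3"
proof (induction arbitrary: t2 rule: rtranclp_induct)
  case base then show ?case by (intro exI[of _ t2]) simp
next
  case (step y z)
  from step.IH[OF step.prems] obtain t3 where "par 0 y t3" "(par 0)\<^sup>*\<^sup>* t2 t3" by blast
  moreover from par_diamond[OF step.hyps(2) \<open>par 0 y t3\<close>] obtain t4 where "par 0 z t4" "par 0 t3 t4" by blast
  ultimately have "par 0 z t4" "(par 0)\<^sup>*\<^sup>* t2 t4" using rtranclp.rtrancl_into_rtrancl by fastforce+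
  then show ?case by blast
qed

lemma par_confluent: "(par 0)\<^sup>*\<^sup>* t t2 \<Longrightarrow> (par 0)\<^sup>*\<^sup>* t t1 \<Longrightarrow> \<exists>t3. (par 0)\<^sup>*\<^sup>* t1 t3 \<and> (par 0)\<^sup>*\<^sup>* t2 t3"
proof (induction arbitrary: t1 rule: rtranclp_induct)
  case base then show ?case by (intro exI[of _ t1]) simp
next
  case (step y z)
  from step.IH[OF step.prems] obtain t3 where h: "(par 0)\<^sup>*\<^sup>* t1 t3" "(par 0)\<^sup>*\<^sup>* y t3" by blast
  from strip[OF h(2) step.hyps(2)] obtain t4 where t4: "par 0 t3 t4" "(par 0)\<^sup>*\<^sup>* z t4" by blast
  have "(par 0)\<^sup>*\<^sup>* t1 t4" using rtranclp.rtrancl_into_rtrancl[OF h(1) t4(1)] .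
  with t4 show ?case by blast
qed


lemma mstep_par: "mstep a b \<Longrightarrow> (par 0)\<^sup>*\<^sup>* a b"
  unfolding mstep_def by (induction rule: rtranclp_induct) (auto intro: rtranclp.rtrancl_into_rtrancl step_par)

lemma par_star_mstep: "(par 0)\<^sup>*\<^sup>* a b \<Longrightarrow> mstep a b"
  by (induction rule: rtranclp_induct) (auto intro: mstep_refl mstep_trans par0_mstep)

theorem lemma1:
  assumes "mstep e e1" and "mstep e e2"
  shows "\<exists>e'. mstep e1 e' \<and> mstep e2 e'"
  using par_confluent[OF mstep_par[OF assms(2)] mstep_par[OF assms(1)]] par_star_mstep by blast

end
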